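(* Let $G$ be a search game (as defined in the context) with ordinally consistent and solitary-search dominant payoffs. Then there exists a pure Nash equilibrium $s$ of $G$ that is socially optimal, i.e., $U(s)=U_{\mathrm{opt}}$.
   Context: A search game $G=(N,\Omega,\Pi,\mu,K,c,v)$ consists of: a finite set of players $N=\{1,\ldots,n\}$; a finite set $\Omega$ of locations; for each player $i$ a partition $\Pi_i$ of $\Omega$, with $\pi_i(\omega)$ the cell containing $\omega$; a common prior $\mu\in\Delta(\Omega)$ with $\mu(\pi_i)>0$ for every cell of every player, and $\mu(\omega|\pi_i)=\mu(\omega)/\mu(\pi_i)$ for $\omega\in\pi_i$; capacities $K_i\in\mathbb{N}$; costs $c_i:\{0,\ldots,K_i\}\to\mathbb{R}_{\ge0}$ with $c_i(0)=0$ and nondecreasing increments $c_i(k+1)-c_i(k)\ge c_i(k)-c_i(k-1)$; rewards $v_i^m(\omega)\ge0$ ($m$ = number of finders including $i$) with $v_i^{m+1}(\omega)\le v_i^m(\omega)$; social values $v_{\mathfrak{s}}(\omega)\ge0$. A pure strategy $s_i$ assigns to each cell $\pi_i$ a subset $s_i(\pi_i)\subseteq\pi_i$ of size at most $K_i$; $S$ is the set of pure profiles. With $m_s(\omega)=\sum_{i}\mathbf{1}_{\omega\in s_i(\pi_i(\omega))}$, player $i$'s payoff is $u_i(s)=\sum_{\omega}\mu(\omega)\big[\mathbf{1}_{\omega\in s_i(\pi_i(\omega))}v_i^{m_s(\omega)}(\omega)-c_i(|s_i(\pi_i(\omega))|)\big]$; a pure Nash equilibrium is a pure profile from which no player gains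 by a unilateral deviation to another pure strategy. The social payoff is $U(s)=\sum_{\omega}\mu(\omega)v_{\mathfrak{s}}(\omega)\mathbf{1}_{m_s(\omega)\ge1}$ and $U_{\mathrm{opt}}=\max_{s\in S}U(s)$. Payoffs are ordinally consistent if for every player $i$, every cell $\pi_i\in\Pi_i$ and all $\omega,\omega'\in\pi_i$: $\mu(\omega)v_i^1(\omega)<\mu(\omega')v_i^1(\omega')$ implies $\mu(\omega)v_{\mathfrak{s}}(\omega)\le\mu(\omega')v_{\mathfrak{s}}(\omega')$. Payoffs are solitary-search dominant if for every player $i$, every cell $\pi_i\in\Pi_i$ and all $\omega,\omega'\in\pi_i$: $\mu(\omega|\pi_i)v_i^1(\omega)\ge\mu(\omega'|\pi_i)v_i^2(\omega')$ and $\mu(\omega|\pi_i)v_i^1(\omega)\ge c_i(K_i)-c_i(K_i-1)$. *)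

theory Defs
  imports Complex_Main
begin

text \<open>Players are the elements of a finite type 'p (so n = card (UNIV :: 'p set)), locations the
elements of a finite type 'w (so Omega = UNIV).  The partition of player i is given by
the cell map part i, where part i w is the cell containing w.  A (pure) strategy of
player i is a map from cells to subsets of them; on sets that are not cells of player i
it is required to be empty (canonical representation).\<close>

definition is_partition_map :: "('w \<Rightarrow> 'w set) \<Rightarrow> bool" where
  "is_partition_map P \<longleftrightarrow> (\<forall>w. w \<in> P w) \<and> (\<forall>w w'. w' \<in> P w \<longrightarrow> P w' = P w)"

definition search_game ::
  "('p::finite \<Rightarrow> 'w::finite \<Rightarrow> 'w set) \<Rightarrow> ('w \<Rightarrow> real) \<Rightarrow> ('p \<Rightarrow> nat)
   \<Rightarrow> ('p \<Rightarrow> nat \<Rightarrow> real) \<Rightarrow> ('p \<Rightarrow> nat \<Rightarrow> 'w \<Rightarrow> real) \<Rightarrow> ('w \<Rightarrow> real) \<Rightarrow> bool" where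
  "search_game part \<mu> K c v vs \<longleftrightarrow>
     (\<forall>i. is_partition_map (part i)) \<and>
     (\<forall>w. \<mu> w \<ge> 0) \<and> (\<Sum>w\<in>UNIV. \<mu> w) = 1 \<and>
     (\<forall>i w. (\<Sum>w'\<in>part i w. \<mu> w') > 0) \<and>
     (\<forall>i. K i \<ge> 1) \<and>
     (\<forall>i. c i 0 = 0) \<and> (\<forall>i k. k \<le> K i \<longrightarrow> c i k \<ge> 0) \<and>
     (\<forall>i k. 1 \<le> k \<and> k + 1 \<le> K i \<longrightarrow> c i (k + 1) - c i k \<ge> c i k - c i (k - 1)) \<and>
     (\<forall>i m w. 1 \<le> m \<and> m \<le> card (UNIV :: 'p set) \<longrightarrow> v i m w \<ge> 0) \<and>
     (\<forall>i m w. 1 \<le> m \<and> m < card (UNIV :: 'p set) \<longrightarrow> v i (m + 1) w \<le> v i m w) \<and>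
     (\<forall>w. vs w \<ge> 0)"

definition cond_prob :: "('p \<Rightarrow> 'w::finite \<Rightarrow> 'w set) \<Rightarrow> ('w \<Rightarrow> real) \<Rightarrow> 'p \<Rightarrow> 'w \<Rightarrow> real" where
  "cond_prob part \<mu> i w = \<mu> w / (\<Sum>w'\<in>part i w. \<mu> w')"

definition pure_strategy ::
  "('p \<Rightarrow> 'w \<Rightarrow> 'w set) \<Rightarrow> ('p \<Rightarrow> nat) \<Rightarrow> 'p \<Rightarrow> ('w set \<Rightarrow> 'w set) \<Rightarrow> bool" where
  "pure_strategy part K i \<sigma> \<longleftrightarrow>
     (\<forall>w. \<sigma> (part i w) \<subseteq> part i w \<and> card (\<sigma> (part i w)) \<le> K i) \<and>
     (\<forall>C. C \<notin> range (part i) \<longrightarrow> \<sigma> C = {})"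

definition pure_profiles ::
  "('p \<Rightarrow> 'w \<Rightarrow> 'w set) \<Rightarrow> ('p \<Rightarrow> nat) \<Rightarrow> ('p \<Rightarrow> 'w set \<Rightarrow> 'w set) set" where
  "pure_profiles part K = {s. \<forall>i. pure_strategy part K i (s i)}"

definition finders ::
  "('p::finite \<Rightarrow> 'w \<Rightarrow> 'w set) \<Rightarrow> ('p \<Rightarrow> 'w set \<Rightarrow> 'w set) \<Rightarrow> 'w \<Rightarrow> nat" where
  "finders part s w = card {i. w \<in> s i (part i w)}"

definition payoff ::
  "('p::finite \<Rightarrow> 'w::finite \<Rightarrow> 'w set) \<Rightarrow> ('w \<Rightarrow> real) \<Rightarrow> ('p \<Rightarrow> nat \<Rightarrow> real)
   \<Rightarrow> ('p \<Rightarrow> nat \<Rightarrow> 'w \<Rightarrow> real) \<Rightarrow> 'p \<Rightarrow> ('p \<Rightarrow> 'w set \<Rightarrow> 'w set) \<Rightarrow> real" where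
  "payoff part \<mu> c v i s =
     (\<Sum>w\<in>UNIV. \<mu> w * ((if w \<in> s i (part i w) then v i (finders part s w) w else 0)
                         - c i (card (s i (part i w)))))"

definition pure_nash ::
  "('p::finite \<Rightarrow> 'w::finite \<Rightarrow> 'w set) \<Rightarrow> ('w \<Rightarrow> real) \<Rightarrow> ('p \<Rightarrow> nat)
   \<Rightarrow> ('p \<Rightarrow> nat \<Rightarrow> real) \<Rightarrow> ('p \<Rightarrow> nat \<Rightarrow> 'w \<Rightarrow> real) \<Rightarrow> ('p \<Rightarrow> 'w set \<Rightarrow> 'w set) \<Rightarrow> bool" where
  "pure_nash part \<mu> K c v s \<longleftrightarrow> s \<in> pure_profiles part K \<and>
     (\<forall>i \<sigma>. pure_strategy part K i \<sigma> \<longrightarrow> payoff part \<mu> c v i (s(i := \<sigma>)) \<le> payoff part \<mu> c v i s)"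

definition social_payoff ::
  "('p::finite \<Rightarrow> 'w::finite \<Rightarrow> 'w set) \<Rightarrow> ('w \<Rightarrow> real) \<Rightarrow> ('w \<Rightarrow> real) \<Rightarrow> ('p \<Rightarrow> 'w set \<Rightarrow> 'w set) \<Rightarrow> real" where
  "social_payoff part \<mu> vs s = (\<Sum>w\<in>UNIV. \<mu> w * vs w * (if finders part s w \<ge> 1 then 1 else 0))"

definition U_opt ::
  "('p::finite \<Rightarrow> 'w::finite \<Rightarrow> 'w set) \<Rightarrow> ('w \<Rightarrow> real) \<Rightarrow> ('p \<Rightarrow> nat) \<Rightarrow> ('w \<Rightarrow> real) \<Rightarrow> real" where
  "U_opt part \<mu> K vs = Max (social_payoff part \<mu> vs ` pure_profiles part K)"

definition ordinally_consistent ::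
  "('p \<Rightarrow> 'w \<Rightarrow> 'w set) \<Rightarrow> ('w \<Rightarrow> real) \<Rightarrow> ('p \<Rightarrow> nat \<Rightarrow> 'w \<Rightarrow> real) \<Rightarrow> ('w \<Rightarrow> real) \<Rightarrow> bool" where
  "ordinally_consistent part \<mu> v vs \<longleftrightarrow>
     (\<forall>i w w'. w' \<in> part i w \<longrightarrow> \<mu> w * v i 1 w < \<mu> w' * v i 1 w'
        \<longrightarrow> \<mu> w * vs w \<le> \<mu> w' * vs w')"

definition solitary_search_dominant ::
  "('p \<Rightarrow> 'w::finite \<Rightarrow> 'w set) \<Rightarrow> ('w \<Rightarrow> real) \<Rightarrow> ('p \<Rightarrow> nat) \<Rightarrow> ('p \<Rightarrow> nat \<Rightarrow> real)
   \<Rightarrow> ('p \<Rightarrow> nat \<Rightarrow> 'w \<Rightarrow> real) \<Rightarrow> bool" where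
  "solitary_search_dominant part \<mu> K c v \<longleftrightarrow>
     (\<forall>i w w'. w' \<in> part i w \<longrightarrow>
        cond_prob part \<mu> i w * v i 1 w \<ge> cond_prob part \<mu> i w' * v i 2 w' \<and>
        cond_prob part \<mu> i w * v i 1 w \<ge> c i (K i) - c i (K i - 1))"

end

theory Submission
  imports Defs
begin

definition cvx :: "(nat \<Rightarrow> real) \<Rightarrow> nat \<Rightarrow> bool" where
  "cvx h K \<longleftrightarrow> (\<forall>j. 1 \<le> j \<and> j + 1 \<le> K \<longrightarrow> h j - h (j-1) \<le> h (j+1) - h j)"

definition opt :: "'w set \<Rightarrow> nat \<Rightarrow> ('w \<Rightarrow> real) \<Rightarrow> (nat \<Rightarrow> real) \<Rightarrow> 'w set \<Rightarrow> bool" where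
  "opt C k f h S \<longleftrightarrow> S \<subseteq> C \<and> card S \<le> k \<and>
     (\<forall>T. T \<subseteq> C \<and> card T \<le> k \<longrightarrow> sum f T - h (card T) \<le> sum f S - h (card S))"

lemma cvx_mono:
  assumes "cvx h K" "1 \<le> i" "i \<le> j" "j \<le> K"
  shows "h i - h (i-1) \<le> h j - h (j-1)"
  using assms(3,4)
proof (induction j)
  case 0 then show ?case using assms(2) by simp
next
  case (Suc j)
  show ?case
  proof (cases "i = Suc j")
    case True then show ?thesis by simp
  next
    case False
    then have "i \<le> j" using Suc by simp
    then have "h i - h (i-1) \<le> h j - h (j-1)" using Suc by simp
    moreover have "h j - h (j-1) \<le> h (j+1) - h j"
      using assms(1) Suc.prems \<open>i \<le> j\<close> assms(2) unfolding cvx_def by auto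
    ultimately show ?thesis by simp
  qed
qed

lemma cvx_up:
  assumes "cvx h K" "j \<le> m" "1 \<le> m" "m \<le> K"
  shows "h m - h j \<le> real (m - j) * (h m - h (m-1))"
proof -
  have "h m - h j = (\<Sum>i = j..<m. h (Suc i) - h i)" using sum_Suc_diff'[OF assms(2), of h] by simp
  also have "\<dots> \<le> real (card {j..<m}) * (h m - h (m-1))"
  proof (rule sum_bounded_above)
    fix i assume "i \<in> {j..<m}"
    then show "h (Suc i) - h i \<le> h m - h (m-1)"
      using cvx_mono[OF assms(1), of "Suc i" m] assms by auto
  qed
  finally show ?thesis by simp
qed

lemma cvx_low:
  assumes "cvx h K" "m < t" "t \<le> K"
  shows "real (t - m) * (h (m+1) - h m) \<le> h t - h m"
proof -
  have "real (card {m..<t}) * (h (m+1) - h m) \<le> (\<Sum>i = m..<t. h (Suc i) - h i)"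
  proof (rule sum_bounded_below)
    fix i assume "i \<in> {m..<t}"
    then show "h (m+1) - h m \<le> h (Suc i) - h i"
      using cvx_mono[OF assms(1), of "Suc m" "Suc i"] assms by auto
  qed
  also have "\<dots> = h t - h m" using sum_Suc_diff'[of m t h] assms by simp
  finally show ?thesis by simp
qed

lemma sum_split_diff:
  fixes f :: "'w::finite \<Rightarrow> real"
  shows "sum f T = sum f S - sum f (S - T) + sum f (T - S)"
proof -
  have e1: "T = (T \<inter> S) \<union> (T - S)" by blast
  have e2: "S = (T \<inter> S) \<union> (S - T)" by blast
  have "sum f T = sum f (T \<inter> S) + sum f (T - S)"
    by (subst e1, rule sum.union_disjoint) auto
  moreover have "sum f S = sum f (T \<inter> S) + sum f (S - T)"
    by (subst e2, rule sum.union_disjoint) auto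
  ultimately show ?thesis by simp
qed

lemma card_split:
  fixes S T :: "'w::finite set"
  shows "card T = card (T \<inter> S) + card (T - S)"
proof -
  have e1: "T = (T \<inter> S) \<union> (T - S)" by blast
  show ?thesis by (subst e1, rule card_Un_disjoint) auto
qed

lemma loc_opt:
  fixes f :: "'w::finite \<Rightarrow> real"
  assumes cv: "cvx h Kx" and SC: "S \<subseteq> C" and Sk: "card S \<le> k" and kK: "k \<le> Kx"
   and A: "\<And>y. y \<in> C - S \<Longrightarrow> card S < k \<Longrightarrow> f y \<le> h (card S + 1) - h (card S)"
   and D: "\<And>x. x \<in> S \<Longrightarrow> h (card S) - h (card S - 1) \<le> f x"
   and E: "\<And>x y. x \<in> S \<Longrightarrow> y \<in> C - S \<Longrightarrow> f y \<le> f x"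
  shows "opt C k f h S"
  unfolding opt_def
proof (intro conjI allI impI SC Sk)
  fix T assume T: "T \<subseteq> C \<and> card T \<le> k"
  define m where "m = card S"
  define t where "t = card T"
  define p where "p = card (S - T)"
  define q where "q = card (T - S)"
  have cT: "t = card (T \<inter> S) + q" unfolding t_def q_def by (rule card_split)
  have cS: "m = card (T \<inter> S) + p" unfolding m_def p_def using card_split[of S T]
    by (simp add: Int_commute)
  have pq: "real t - real m = real q - real p" using cT cS by simp
  have split: "sum f T = sum f S - sum f (S - T) + sum f (T - S)" by (rule sum_split_diff)
  show "sum f T - h (card T) \<le> sum f S - h (card S)"
  proof (cases "t \<le> m")
    case True
    show ?thesis
    proof (cases "S - T = {}")
      case True
      then have "p = 0" unfolding p_def by simp
      then have "q = 0" using cT cS \<open>t \<le> m\<close> by simp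
      then have "T - S = {}" unfolding q_def by simp
      with \<open>S - T = {}\<close> have "T = S" by blast
      then show ?thesis by simp
    next
      case False
      define \<alpha> where "\<alpha> = Min (f ` (S - T))"
      have "\<alpha> \<in> f ` (S - T)" unfolding \<alpha>_def using False by (intro Min_in) auto
      then obtain x0 where x0: "x0 \<in> S - T" "\<alpha> = f x0" by auto
      have "of_nat p * \<alpha> \<le> sum f (S - T)" unfolding p_def
        by (rule sum_bounded_below) (auto simp: \<alpha>_def)
      moreover have "sum f (T - S) \<le> of_nat q * \<alpha>" unfolding q_def
        by (rule sum_bounded_above) (use x0 E T in auto)
      ultimately have "sum f T - sum f S \<le> (real q - real p) * \<alpha>"
        using split by (simp add: algebra_simps)
      also have "\<dots> = - (real (m - t)) * \<alpha>" using pq True by (simp add: of_nat_diff)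
      finally have 1: "sum f T - sum f S \<le> - (real (m - t)) * \<alpha>" .
      have "S \<noteq> {}" using x0 by auto
      then have "1 \<le> m" unfolding m_def by (simp add: card_gt_0_iff Suc_le_eq)
      have "m \<le> Kx" using Sk kK m_def by simp
      have d: "h m - h (m - 1) \<le> \<alpha>" using D x0 m_def by auto
      have 2: "h m - h t \<le> real (m - t) * (h m - h (m-1))"
        by (rule cvx_up[OF cv True \<open>1 \<le> m\<close> \<open>m \<le> Kx\<close>])
      have 3: "real (m - t) * (h m - h (m-1)) \<le> real (m - t) * \<alpha>"
        by (rule mult_left_mono[OF d]) simp
      show ?thesis using 1 2 3 unfolding m_def t_def by simp
    qed
  next
    case False
    then have "q > 0" using cT cS by simp
    then have ne: "T - S \<noteq> {}" unfolding q_def by (metis card.empty less_irrefl)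
    define \<beta> where "\<beta> = Max (f ` (T - S))"
    have "\<beta> \<in> f ` (T - S)" unfolding \<beta>_def using ne by (intro Max_in) auto
    then obtain y0 where y0: "y0 \<in> T - S" "\<beta> = f y0" by auto
    have "of_nat p * \<beta> \<le> sum f (S - T)" unfolding p_def
      by (rule sum_bounded_below) (use y0 E T in auto)
    moreover have "sum f (T - S) \<le> of_nat q * \<beta>" unfolding q_def
      by (rule sum_bounded_above) (auto simp: \<beta>_def)
    ultimately have "sum f T - sum f S \<le> (real q - real p) * \<beta>"
      using split by (simp add: algebra_simps)
    also have "\<dots> = real (t - m) * \<beta>" using pq False by (simp add: of_nat_diff)
    finally have 1: "sum f T - sum f S \<le> real (t - m) * \<beta>" .
    have "m < k" using False T t_def by simp
    have b: "\<beta> \<le> h (m + 1) - h m" using A y0 T \<open>m < k\<close> m_def by auto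
    have 2: "real (t - m) * (h (m+1) - h m) \<le> h t - h m"
      by (rule cvx_low[OF cv]) (use False T kK t_def in auto)
    have 3: "real (t - m) * \<beta> \<le> real (t - m) * (h (m+1) - h m)"
      by (rule mult_left_mono[OF b]) simp
    show ?thesis using 1 2 3 unfolding m_def t_def by simp
  qed
qed

lemma opt_nec:
  fixes f :: "'w::finite \<Rightarrow> real"
  assumes "opt C k f h S"
  shows "S \<subseteq> C" "card S \<le> k"
    "\<And>y. y \<in> C - S \<Longrightarrow> card S < k \<Longrightarrow> f y \<le> h (card S + 1) - h (card S)"
    "\<And>x. x \<in> S \<Longrightarrow> h (card S) - h (card S - 1) \<le> f x"
    "\<And>x y. x \<in> S \<Longrightarrow> y \<in> C - S \<Longrightarrow> f y \<le> f x"
proof -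
  have SC: "S \<subseteq> C" and Sk: "card S \<le> k" and O: "\<And>T. T \<subseteq> C \<Longrightarrow> card T \<le> k \<Longrightarrow> sum f T - h (card T) \<le> sum f S - h (card S)"
    using assms unfolding opt_def by auto
  show "S \<subseteq> C" "card S \<le> k" by fact+
  show "f y \<le> h (card S + 1) - h (card S)" if "y \<in> C - S" "card S < k" for y
  proof -
    have "sum f (insert y S) - h (card (insert y S)) \<le> sum f S - h (card S)"
      using O[of "insert y S"] that SC by auto
    then show ?thesis using that by (simp add: sum.insert)
  qed
  show "h (card S) - h (card S - 1) \<le> f x" if "x \<in> S" for x
  proof -
    have s1: "S - {x} \<subseteq> C" using SC by auto
    have s2: "card (S - {x}) \<le> k" using Sk that by (simp add: card_Diff_singleton)
    have "sum f (S - {x}) - h (card (S - {x})) \<le> sum f S - h (card S)"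
      by (rule O[OF s1 s2])
    moreover have "sum f S = f x + sum f (S - {x})" using that by (simp add: sum.remove)
    ultimately show ?thesis using that by (simp add: card_Diff_singleton)
  qed
  show "f y \<le> f x" if "x \<in> S" "y \<in> C - S" for x y
  proof -
    have "S \<noteq> {}" using that by auto
    then have "card S \<ge> 1" by (simp add: card_gt_0_iff Suc_le_eq)
    moreover have "y \<notin> S - {x}" using that by auto
    ultimately have c: "card (insert y (S - {x})) = card S"
      using that by (simp add: card_Diff_singleton)
    have "sum f (insert y (S - {x})) - h (card (insert y (S - {x}))) \<le> sum f S - h (card S)"
      using O[of "insert y (S - {x})"] that SC Sk c by auto
    moreover have "sum f S = f x + sum f (S - {x})" using that by (simp add: sum.remove)
    moreover have "sum f (insert y (S - {x})) = f y + sum f (S - {x})" using that by simp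
    ultimately show ?thesis using c by simp
  qed
qed

lemma opt_mono:
  fixes f g :: "'w::finite \<Rightarrow> real"
  assumes "opt C k f h S" "\<And>w. w \<in> S \<Longrightarrow> f w \<le> g w" "\<And>w. w \<in> C - S \<Longrightarrow> g w \<le> f w"
  shows "opt C k g h S"
  unfolding opt_def
proof (intro conjI allI impI)
  show "S \<subseteq> C" "card S \<le> k" using assms(1) unfolding opt_def by auto
  fix T assume T: "T \<subseteq> C \<and> card T \<le> k"
  have O: "sum f T - h (card T) \<le> sum f S - h (card S)" using assms(1) T unfolding opt_def by auto
  have "sum g T = sum g S - sum g (S - T) + sum g (T - S)" by (rule sum_split_diff)
  moreover have "sum f T = sum f S - sum f (S - T) + sum f (T - S)" by (rule sum_split_diff)
  moreover have "sum g (T - S) \<le> sum f (T - S)" by (rule sum_mono) (use assms(3) T in auto)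
  moreover have "sum f (S - T) \<le> sum g (S - T)" by (rule sum_mono) (use assms(2) in auto)
  ultimately show "sum g T - h (card T) \<le> sum g S - h (card S)" using O by simp
qed

lemma opt_cong:
  fixes f g :: "'w::finite \<Rightarrow> real"
  assumes "opt C k f h S" "\<And>w. w \<in> C \<Longrightarrow> f w = g w"
  shows "opt C k g h S"
proof -
  have "S \<subseteq> C" using assms(1) unfolding opt_def by auto
  show ?thesis by (rule opt_mono[OF assms(1)]) (use assms(2) \<open>S \<subseteq> C\<close> in auto)
qed

lemma max_obtain:
  fixes f :: "'w::finite \<Rightarrow> real"
  assumes "A \<noteq> {}"
  obtains y where "y \<in> A" "\<And>z. z \<in> A \<Longrightarrow> f z \<le> f y"
proof -
  have "Max (f ` A) \<in> f ` A" using assms by (intro Max_in) auto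
  then obtain y where y: "y \<in> A" "Max (f ` A) = f y" by auto
  have "\<And>z. z \<in> A \<Longrightarrow> f z \<le> f y" using y by (metis Max_ge finite finite_imageI imageI)
  then show ?thesis using that y by blast
qed

lemma opt_add:
  fixes f :: "'w::finite \<Rightarrow> real"
  assumes cv: "cvx h Kx" and o: "opt C k f h S" and kK: "k + 1 \<le> Kx"
  shows "opt C (k+1) f h S \<or> (\<exists>y \<in> C - S. opt C (k+1) f h (insert y S))"
proof -
  note N = opt_nec[OF o]
  show ?thesis
  proof (cases "\<forall>y\<in>C-S. f y \<le> h (card S + 1) - h (card S)")
    case True
    have "opt C (k+1) f h S"
      by (rule loc_opt[OF cv N(1)]) (use N True kK in auto)
    then show ?thesis by simp
  next
    case False
    then obtain y1 where y1: "y1 \<in> C - S" "f y1 > h (card S + 1) - h (card S)" by auto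
    have cS: "card S = k"
    proof (rule ccontr)
      assume "card S \<noteq> k"
      then have "card S < k" using N(2) by simp
      then show False using N(3)[OF y1(1)] y1(2) by simp
    qed
    obtain ys where ys: "ys \<in> C - S" "\<And>z. z \<in> C - S \<Longrightarrow> f z \<le> f ys"
      using max_obtain[of "C - S" f] y1(1) by blast
    have c2: "card (insert ys S) = k + 1" using ys(1) cS by simp
    have "opt C (k+1) f h (insert ys S)"
    proof (rule loc_opt[OF cv _ _ kK])
      show "insert ys S \<subseteq> C" using ys N(1) by auto
      show "card (insert ys S) \<le> k + 1" using c2 by simp
      show "f y \<le> h (card (insert ys S) + 1) - h (card (insert ys S))"
        if "y \<in> C - insert ys S" "card (insert ys S) < k + 1" for y using that c2 by simp
      show "h (card (insert ys S)) - h (card (insert ys S) - 1) \<le> f x" if "x \<in> insert ys S" for x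
      proof -
        have "h (card (insert ys S)) - h (card (insert ys S) - 1) = h (card S + 1) - h (card S)"
          using c2 cS by simp
        also have "\<dots> < f ys" using y1 ys(2)[OF y1(1)] by simp
        also have "f ys \<le> f x" using that N(5)[OF _ ys(1)] by auto
        finally show ?thesis by simp
      qed
      show "f z \<le> f x" if "x \<in> insert ys S" "z \<in> C - insert ys S" for x z
        using that ys(2)[of z] N(5)[of x z] by auto
    qed
    then show ?thesis using ys(1) by blast
  qed
qed

lemma sum_change1:
  fixes f f' :: "'w::finite \<Rightarrow> real"
  assumes "\<And>w. w \<noteq> h0 \<Longrightarrow> f w = f' w" "h0 \<in> T"
  shows "sum f T = sum f' T - f' h0 + f h0"
proof -
  have "sum f (T - {h0}) = sum f' (T - {h0})" by (rule sum.cong) (use assms in auto)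
  then show ?thesis using assms(2) by (simp add: sum.remove)
qed

lemma opt_combine:
  fixes f f' :: "'w::finite \<Rightarrow> real"
  assumes o: "opt C k f' h S" and h0: "h0 \<in> S"
   and eq: "\<And>w. w \<noteq> h0 \<Longrightarrow> f w = f' w" and le: "f h0 \<le> f' h0"
   and o2: "opt (C - {h0}) k f h S'"
  shows "opt C k f h S \<or> opt C k f h S'"
proof -
  have SC: "S \<subseteq> C" "card S \<le> k" and O: "\<And>T. T \<subseteq> C \<Longrightarrow> card T \<le> k \<Longrightarrow> sum f' T - h (card T) \<le> sum f' S - h (card S)"
    using o unfolding opt_def by auto
  have SC2: "S' \<subseteq> C - {h0}" "card S' \<le> k" and O2: "\<And>T. T \<subseteq> C - {h0} \<Longrightarrow> card T \<le> k \<Longrightarrow> sum f T - h (card T) \<le> sum f S' - h (card S')"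
    using o2 unfolding opt_def by auto
  have sS: "sum f S = sum f' S - f' h0 + f h0" by (rule sum_change1[OF eq h0])
  have bound: "sum f T - h (card T) \<le> max (sum f S - h (card S)) (sum f S' - h (card S'))"
    if T: "T \<subseteq> C" "card T \<le> k" for T
  proof (cases "h0 \<in> T")
    case True
    have "sum f T = sum f' T - f' h0 + f h0" by (rule sum_change1[OF eq True])
    then have "sum f T - h (card T) \<le> sum f S - h (card S)" using O[OF T] sS by simp
    then show ?thesis by simp
  next
    case False
    then have TT: "T \<subseteq> C - {h0}" using T by auto
    have "sum f T - h (card T) \<le> sum f S' - h (card S')" by (rule O2[OF TT T(2)])
    then show ?thesis by simp
  qed
  show ?thesis
  proof (cases "sum f S' - h (card S') \<le> sum f S - h (card S)")
    case True
    have "opt C k f h S" unfolding opt_def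
    proof (intro conjI allI impI SC)
      fix T assume "T \<subseteq> C \<and> card T \<le> k"
      then have "sum f T - h (card T) \<le> max (sum f S - h (card S)) (sum f S' - h (card S'))"
        using bound by simp
      then show "sum f T - h (card T) \<le> sum f S - h (card S)" using True by simp
    qed
    then show ?thesis by simp
  next
    case False
    have "S' \<subseteq> C" using SC2 by auto
    have "opt C k f h S'" unfolding opt_def
    proof (intro conjI allI impI SC2(2) \<open>S' \<subseteq> C\<close>)
      fix T assume "T \<subseteq> C \<and> card T \<le> k"
      then have "sum f T - h (card T) \<le> max (sum f S - h (card S)) (sum f S' - h (card S'))"
        using bound by simp
      then show "sum f T - h (card T) \<le> sum f S' - h (card S')" using False by simp
    qed
    then show ?thesis by simp
  qed
qed

lemma opt_change:
  fixes f f' :: "'w::finite \<Rightarrow> real"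
  assumes cv: "cvx h Kx" and kK: "k \<le> Kx" and o: "opt C k f' h S" and h0: "h0 \<in> S"
   and eq: "\<And>w. w \<noteq> h0 \<Longrightarrow> f w = f' w" and le: "f h0 \<le> f' h0"
  shows "opt C k f h S \<or> opt C k f h (S - {h0}) \<or> (\<exists>y \<in> C - S. opt C k f h (insert y (S - {h0})))"
proof -
  note N = opt_nec[OF o]
  define m where "m = card S"
  have "S \<noteq> {}" using h0 by auto
  then have m1: "m \<ge> 1" unfolding m_def by (simp add: card_gt_0_iff Suc_le_eq)
  have cS1: "card (S - {h0}) = m - 1" using h0 m_def by (simp add: card_Diff_singleton)
  have mK: "m \<le> Kx" using N(2) kK m_def by simp
  show ?thesis
  proof (cases "\<forall>y\<in>C-S. f y \<le> h m - h (m - 1)")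
    case True
    have "opt (C - {h0}) k f h (S - {h0})"
    proof (rule loc_opt[OF cv _ _ kK])
      show "S - {h0} \<subseteq> C - {h0}" using N(1) by auto
      show "card (S - {h0}) \<le> k" using cS1 N(2) m_def by simp
      show "f y \<le> h (card (S - {h0}) + 1) - h (card (S - {h0}))"
        if "y \<in> C - {h0} - (S - {h0})" "card (S - {h0}) < k" for y
        using True that cS1 m1 by auto
      show "h (card (S - {h0})) - h (card (S - {h0}) - 1) \<le> f x" if "x \<in> S - {h0}" for x
      proof -
        have "S - {h0} \<noteq> {}" using that by auto
        then have "card (S - {h0}) \<ge> 1" by (simp add: card_gt_0_iff Suc_le_eq)
        then have "m - 1 \<ge> 1" using cS1 by simp
        then have "h (m - 1) - h (m - 1 - 1) \<le> h m - h (m - 1)"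
          using cvx_mono[OF cv, of "m-1" m] mK by simp
        also have "\<dots> \<le> f' x" using N(4) that m_def by auto
        also have "\<dots> = f x" using eq that by auto
        finally show ?thesis using cS1 by simp
      qed
      show "f y \<le> f x" if "x \<in> S - {h0}" "y \<in> C - {h0} - (S - {h0})" for x y
        using that N(5)[of x y] eq[of x] eq[of y] by auto
    qed
    then show ?thesis using opt_combine[OF o h0 eq le] by blast
  next
    case False
    then obtain y1 where y1: "y1 \<in> C - S" "f y1 > h m - h (m - 1)" by auto
    obtain ys where ys: "ys \<in> C - S" "\<And>z. z \<in> C - S \<Longrightarrow> f z \<le> f ys"
      using max_obtain[of "C - S" f] y1(1) by blast
    have ysh: "ys \<noteq> h0" using ys h0 by auto
    have c2: "card (insert ys (S - {h0})) = m" using cS1 m1 ys(1) by simp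
    have "opt (C - {h0}) k f h (insert ys (S - {h0}))"
    proof (rule loc_opt[OF cv _ _ kK])
      show "insert ys (S - {h0}) \<subseteq> C - {h0}" using N(1) ys ysh by auto
      show "card (insert ys (S - {h0})) \<le> k" using c2 N(2) m_def by simp
      show "f z \<le> h (card (insert ys (S - {h0})) + 1) - h (card (insert ys (S - {h0})))"
        if "z \<in> C - {h0} - insert ys (S - {h0})" "card (insert ys (S - {h0})) < k" for z
      proof -
        have "z \<in> C - S" using that by auto
        then have "f' z \<le> h (card S + 1) - h (card S)" using N(3) that c2 m_def by auto
        then show ?thesis using eq[of z] that c2 m_def by auto
      qed
      show "h (card (insert ys (S - {h0}))) - h (card (insert ys (S - {h0})) - 1) \<le> f x"
        if "x \<in> insert ys (S - {h0})" for x
      proof -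
        have "h m - h (m - 1) < f ys" using y1 ys(2)[OF y1(1)] by simp
        moreover have "x \<in> S - {h0} \<Longrightarrow> f ys \<le> f x" using N(5)[of x ys] ys(1) eq[of x] eq[of ys] ysh by auto
        ultimately have "h m - h (m - 1) < f x" using that by (cases "x = ys") auto
        then show ?thesis using c2 by simp
      qed
      show "f z \<le> f x" if "x \<in> insert ys (S - {h0})" "z \<in> C - {h0} - insert ys (S - {h0})" for x z
      proof -
        have z: "z \<in> C - S" "z \<noteq> h0" using that by auto
        show ?thesis
        proof (cases "x = ys")
          case True then show ?thesis using ys(2)[OF z(1)] by simp
        next
          case False
          then have "x \<in> S - {h0}" using that by auto
          then show ?thesis using N(5)[of x z] z eq[of x] eq[of z] by auto
        qed
      qed
    qed
    then show ?thesis using opt_combine[OF o h0 eq le] ys(1) by blast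
  qed
qed



locale SG =
  fixes part :: "'p::finite \<Rightarrow> 'w::finite \<Rightarrow> 'w set"
    and \<mu> :: "'w \<Rightarrow> real" and K :: "'p \<Rightarrow> nat" and c :: "'p \<Rightarrow> nat \<Rightarrow> real"
    and v :: "'p \<Rightarrow> nat \<Rightarrow> 'w \<Rightarrow> real" and vs :: "'w \<Rightarrow> real"
  assumes sg: "search_game part \<mu> K c v vs"
begin

definition oth :: "('p \<Rightarrow> 'w set \<Rightarrow> 'w set) \<Rightarrow> 'p \<Rightarrow> 'w \<Rightarrow> nat" where
  "oth s i w = card {j. j \<noteq> i \<and> w \<in> s j (part j w)}"

definition msum :: "'w set \<Rightarrow> real" where "msum C = sum \<mu> C"

definition fv :: "'p \<Rightarrow> ('w \<Rightarrow> nat) \<Rightarrow> 'w \<Rightarrow> real" where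
  "fv i Q w = \<mu> w * v i (Suc (Q w)) w"

definition hc :: "'p \<Rightarrow> 'w set \<Rightarrow> nat \<Rightarrow> real" where
  "hc i C k = msum C * c i k"

definition hp :: "'w set \<Rightarrow> nat \<Rightarrow> 'p \<Rightarrow> ('w \<Rightarrow> nat) \<Rightarrow> 'w set \<Rightarrow> bool" where
  "hp C k i Q S \<longleftrightarrow> opt C k (fv i Q) (hc i C) S"

definition valid :: "('p \<Rightarrow> 'w set \<Rightarrow> nat) \<Rightarrow> ('p \<Rightarrow> 'w set \<Rightarrow> 'w set) \<Rightarrow> bool" where
  "valid \<kappa> s \<longleftrightarrow> (\<forall>i. (\<forall>C \<in> range (part i). s i C \<subseteq> C \<and> card (s i C) \<le> \<kappa> i C) \<and>
      (\<forall>C. C \<notin> range (part i) \<longrightarrow> s i C = {}))"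

definition NEk :: "('p \<Rightarrow> 'w set \<Rightarrow> nat) \<Rightarrow> ('p \<Rightarrow> 'w set \<Rightarrow> 'w set) \<Rightarrow> bool" where
  "NEk \<kappa> s \<longleftrightarrow> valid \<kappa> s \<and> (\<forall>i C. C \<in> range (part i) \<longrightarrow> hp C (\<kappa> i C) i (oth s i) (s i C))"

definition upd :: "('p \<Rightarrow> 'w set \<Rightarrow> 'w set) \<Rightarrow> 'p \<Rightarrow> 'w set \<Rightarrow> 'w set \<Rightarrow> ('p \<Rightarrow> 'w set \<Rightarrow> 'w set)" where
  "upd s i C T = s(i := (s i)(C := T))"

definition dec :: "'w \<Rightarrow> ('w \<Rightarrow> nat) \<Rightarrow> ('w \<Rightarrow> nat)" where
  "dec h Q = Q(h := Q h - 1)"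

lemma part_in: "w \<in> part i w"
  using sg unfolding search_game_def is_partition_map_def by auto

lemma part_eq: "w' \<in> part i w \<Longrightarrow> part i w' = part i w"
  using sg unfolding search_game_def is_partition_map_def by auto

lemma cell_eq: "C \<in> range (part i) \<Longrightarrow> w \<in> C \<Longrightarrow> part i w = C"
  using part_eq by auto

lemma cell_disj: "C \<in> range (part i) \<Longrightarrow> C' \<in> range (part i) \<Longrightarrow> C \<noteq> C' \<Longrightarrow> w \<in> C \<Longrightarrow> w \<notin> C'"
  using cell_eq by metis

lemma mu_nonneg: "\<mu> w \<ge> 0"
  using sg unfolding search_game_def by auto

lemma msum_pos: "msum (part i w) > 0"
  using sg unfolding search_game_def msum_def by auto

lemma msum_nonneg: "msum C \<ge> 0"
  unfolding msum_def by (rule sum_nonneg) (simp add: mu_nonneg)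

lemma K_pos: "K i \<ge> 1"
  using sg unfolding search_game_def by auto

lemma cvx_hc: "cvx (hc i C) (K i)"
proof -
  have "\<And>k. 1 \<le> k \<and> k + 1 \<le> K i \<Longrightarrow> c i k - c i (k - 1) \<le> c i (k + 1) - c i k"
    using sg unfolding search_game_def by auto
  then show ?thesis unfolding cvx_def hc_def
    using msum_nonneg[of C] by (auto simp: right_diff_distrib[symmetric] intro: mult_left_mono)
qed

lemma v_mono: "1 \<le> a \<Longrightarrow> a \<le> b \<Longrightarrow> b \<le> card (UNIV :: 'p set) \<Longrightarrow> v i b w \<le> v i a w"
proof (induction b)
  case 0 then show ?case by simp
next
  case (Suc b)
  show ?case
  proof (cases "a = Suc b")
    case True then show ?thesis by simp
  next
    case False
    then have "a \<le> b" using Suc by simp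
    then have "v i b w \<le> v i a w" using Suc by simp
    moreover have "v i (b + 1) w \<le> v i b w"
      using sg Suc.prems \<open>a \<le> b\<close> unfolding search_game_def by auto
    ultimately show ?thesis by simp
  qed
qed

lemma oth_le: "Suc (oth s i w) \<le> card (UNIV :: 'p set)"
proof -
  have "{j. j \<noteq> i \<and> w \<in> s j (part j w)} \<subseteq> UNIV - {i}" by auto
  then have "oth s i w \<le> card (UNIV - {i} :: 'p set)" unfolding oth_def by (intro card_mono) auto
  also have "\<dots> = card (UNIV :: 'p set) - 1" by (simp add: card_Diff_singleton)
  finally show ?thesis using finite_UNIV_card_ge_0[where 'a='p, OF finite_UNIV] by simp
qed

lemma fv_mono: "Q' w \<le> Q w \<Longrightarrow> Suc (Q w) \<le> card (UNIV :: 'p set) \<Longrightarrow> fv i Q w \<le> fv i Q' w"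
  unfolding fv_def using v_mono[of "Suc (Q' w)" "Suc (Q w)" i w] mu_nonneg[of w]
  by (simp add: mult_left_mono)

lemma hp_mono:
  assumes "hp C k i Q S"
    and "\<And>w. w \<in> S \<Longrightarrow> Q' w \<le> Q w \<and> Suc (Q w) \<le> card (UNIV :: 'p set)"
    and "\<And>w. w \<in> C - S \<Longrightarrow> Q w \<le> Q' w \<and> Suc (Q' w) \<le> card (UNIV :: 'p set)"
  shows "hp C k i Q' S"
  using assms(1) unfolding hp_def
  by (rule opt_mono) (use assms(2,3) fv_mono in auto)

lemma hp_cong:
  assumes "hp C k i Q S" "\<And>w. w \<in> C \<Longrightarrow> Q w = Q' w"
  shows "hp C k i Q' S"
  using assms(1) unfolding hp_def
  by (rule opt_cong) (use assms(2) in \<open>auto simp: fv_def\<close>)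

lemma fnd_oth: "finders part s w = oth s i w + (if w \<in> s i (part i w) then 1 else 0)"
proof -
  have e: "{j. w \<in> s j (part j w)} = {j. j \<noteq> i \<and> w \<in> s j (part j w)} \<union> (if w \<in> s i (part i w) then {i} else {})"
    by auto
  show ?thesis unfolding finders_def oth_def e
    by (subst card_Un_disjoint) auto
qed

lemma oth_upd_self: "oth (s(i := \<sigma>)) i w = oth s i w"
  unfolding oth_def by (rule arg_cong[where f=card]) auto

lemma srch_upd: "C \<in> range (part b) \<Longrightarrow>
  (w \<in> upd s b C T j (part j w)) = (if j = b \<and> w \<in> C then w \<in> T else w \<in> s j (part j w))"
  unfolding upd_def using cell_eq[of C b w] part_in[of w b] by auto

lemma oth_upd_other:
  assumes "i \<noteq> b"
  shows "oth (upd s b C T) i w + (if w \<in> s b (part b w) then 1 else 0)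
       = oth s i w + (if w \<in> upd s b C T b (part b w) then 1 else 0)"
proof -
  let ?s' = "upd s b C T"
  have a: "finders part ?s' w = oth ?s' i w + (if w \<in> ?s' i (part i w) then 1 else 0)" by (rule fnd_oth)
  have b: "finders part ?s' w = oth ?s' b w + (if w \<in> ?s' b (part b w) then 1 else 0)" by (rule fnd_oth)
  have c: "finders part s w = oth s i w + (if w \<in> s i (part i w) then 1 else 0)" by (rule fnd_oth)
  have d: "finders part s w = oth s b w + (if w \<in> s b (part b w) then 1 else 0)" by (rule fnd_oth)
  have e: "oth ?s' b w = oth s b w" unfolding upd_def by (rule oth_upd_self)
  have f: "?s' i = s i" using assms unfolding upd_def by simp
  show ?thesis using a b c d e f by (simp split: if_splits)
qed

lemma payoff_cells:
  assumes "\<And>C. C \<in> range (part i) \<Longrightarrow> s i C \<subseteq> C"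
  shows "payoff part \<mu> c v i s = (\<Sum>C\<in>range (part i).
     (\<Sum>w\<in>s i C. \<mu> w * v i (finders part s w) w) - msum C * c i (card (s i C)))"
proof -
  let ?F = "\<lambda>w. \<mu> w * ((if w \<in> s i (part i w) then v i (finders part s w) w else 0) - c i (card (s i (part i w))))"
  have U: "(UNIV :: 'w set) = \<Union> (range (part i))" using part_in by blast
  have "payoff part \<mu> c v i s = sum ?F (\<Union> (range (part i)))" unfolding payoff_def using U by simp
  also have "\<dots> = (sum \<circ> sum) ?F (range (part i))"
  proof (rule sum.Union_disjoint)
    show "\<forall>A\<in>range (part i). \<forall>B\<in>range (part i). A \<noteq> B \<longrightarrow> A \<inter> B = {}"
      using cell_disj by blast
  qed simp
  also have "\<dots> = (\<Sum>C\<in>range (part i). sum ?F C)" by simp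
  also have "\<dots> = (\<Sum>C\<in>range (part i).
     (\<Sum>w\<in>s i C. \<mu> w * v i (finders part s w) w) - msum C * c i (card (s i C)))"
  proof (rule sum.cong[OF refl])
    fix C assume C: "C \<in> range (part i)"
    have "sum ?F C = (\<Sum>w\<in>C. (if w \<in> s i C then \<mu> w * v i (finders part s w) w else 0) - \<mu> w * c i (card (s i C)))"
      by (rule sum.cong[OF refl]) (use cell_eq[OF C] in \<open>auto simp: algebra_simps\<close>)
    also have "\<dots> = (\<Sum>w\<in>C. if w \<in> s i C then \<mu> w * v i (finders part s w) w else 0) - msum C * c i (card (s i C))"
      by (simp add: sum_subtractf msum_def sum_distrib_right)
    also have "(\<Sum>w\<in>C. if w \<in> s i C then \<mu> w * v i (finders part s w) w else 0) = (\<Sum>w\<in>s i C. \<mu> w * v i (finders part s w) w)"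
      using assms[OF C] by (simp add: sum.inter_restrict[symmetric] Int_absorb1)
    finally show "sum ?F C = (\<Sum>w\<in>s i C. \<mu> w * v i (finders part s w) w) - msum C * c i (card (s i C))" .
  qed
  finally show ?thesis .
qed

lemma NE_full:
  assumes "NEk (\<lambda>i C. K i) s"
  shows "pure_nash part \<mu> K c v s"
proof -
  have V: "valid (\<lambda>i C. K i) s" and H: "\<And>i C. C \<in> range (part i) \<Longrightarrow> hp C (K i) i (oth s i) (s i C)"
    using assms unfolding NEk_def by auto
  have ps: "pure_strategy part K i (s i)" for i
    using V unfolding valid_def pure_strategy_def by auto
  show ?thesis unfolding pure_nash_def pure_profiles_def
  proof (intro conjI allI impI CollectI)
    fix i \<sigma> assume \<sigma>: "pure_strategy part K i \<sigma>"
    let ?s' = "s(i := \<sigma>)"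
    have \<sigma>C: "\<sigma> C \<subseteq> C \<and> card (\<sigma> C) \<le> K i" if "C \<in> range (part i)" for C
      using \<sigma> that unfolding pure_strategy_def by auto
    have sC: "s i C \<subseteq> C" if "C \<in> range (part i)" for C using V that unfolding valid_def by auto
    have "payoff part \<mu> c v i ?s' = (\<Sum>C\<in>range (part i).
       (\<Sum>w\<in>\<sigma> C. \<mu> w * v i (finders part ?s' w) w) - msum C * c i (card (\<sigma> C)))"
      using payoff_cells[of i ?s'] \<sigma>C by simp
    also have "\<dots> = (\<Sum>C\<in>range (part i). sum (fv i (oth s i)) (\<sigma> C) - hc i C (card (\<sigma> C)))"
    proof (rule sum.cong[OF refl])
      fix C assume C: "C \<in> range (part i)"
      have "(\<Sum>w\<in>\<sigma> C. \<mu> w * v i (finders part ?s' w) w) = sum (fv i (oth s i)) (\<sigma> C)"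
      proof (rule sum.cong[OF refl])
        fix w assume w: "w \<in> \<sigma> C"
        then have "part i w = C" using cell_eq[OF C] \<sigma>C[OF C] by auto
        then have "finders part ?s' w = Suc (oth s i w)"
          using fnd_oth[of ?s' w i] oth_upd_self[of s i \<sigma> w] w by simp
        then show "\<mu> w * v i (finders part ?s' w) w = fv i (oth s i) w" unfolding fv_def by simp
      qed
      then show "(\<Sum>w\<in>\<sigma> C. \<mu> w * v i (finders part ?s' w) w) - msum C * c i (card (\<sigma> C)) =
          sum (fv i (oth s i)) (\<sigma> C) - hc i C (card (\<sigma> C))" unfolding hc_def by simp
    qed
    also have "\<dots> \<le> (\<Sum>C\<in>range (part i). sum (fv i (oth s i)) (s i C) - hc i C (card (s i C)))"
    proof (rule sum_mono)
      fix C assume C: "C \<in> range (part i)"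
      show "sum (fv i (oth s i)) (\<sigma> C) - hc i C (card (\<sigma> C)) \<le> sum (fv i (oth s i)) (s i C) - hc i C (card (s i C))"
        using H[OF C] \<sigma>C[OF C] unfolding hp_def opt_def by auto
    qed
    also have "\<dots> = payoff part \<mu> c v i s"
    proof -
      have "payoff part \<mu> c v i s = (\<Sum>C\<in>range (part i).
       (\<Sum>w\<in>s i C. \<mu> w * v i (finders part s w) w) - msum C * c i (card (s i C)))"
        using payoff_cells[of i s] sC by simp
      also have "\<dots> = (\<Sum>C\<in>range (part i). sum (fv i (oth s i)) (s i C) - hc i C (card (s i C)))"
      proof (rule sum.cong[OF refl])
        fix C assume C: "C \<in> range (part i)"
        have "(\<Sum>w\<in>s i C. \<mu> w * v i (finders part s w) w) = sum (fv i (oth s i)) (s i C)"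
        proof (rule sum.cong[OF refl])
          fix w assume w: "w \<in> s i C"
          then have "part i w = C" using cell_eq[OF C] sC[OF C] by auto
          then have "finders part s w = Suc (oth s i w)" using fnd_oth[of s w i] w by simp
          then show "\<mu> w * v i (finders part s w) w = fv i (oth s i) w" unfolding fv_def by simp
        qed
        then show "(\<Sum>w\<in>s i C. \<mu> w * v i (finders part s w) w) - msum C * c i (card (s i C)) =
          sum (fv i (oth s i)) (s i C) - hc i C (card (s i C))" unfolding hc_def by simp
      qed
      finally show ?thesis by simp
    qed
    finally show "payoff part \<mu> c v i ?s' \<le> payoff part \<mu> c v i s" .
  qed (use ps in auto)
qed

end


lemma sum_upd_point:
  fixes g g' :: "'a::finite \<Rightarrow> real"
  assumes "\<And>w. w \<noteq> x \<Longrightarrow> g' w = g w"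
  shows "sum g' UNIV = sum g UNIV - g x + g' x"
proof -
  have "sum g' (UNIV - {x}) = sum g (UNIV - {x})" by (rule sum.cong) (use assms in auto)
  moreover have "sum g' UNIV = g' x + sum g' (UNIV - {x})" by (simp add: sum.remove)
  moreover have "sum g UNIV = g x + sum g (UNIV - {x})" by (simp add: sum.remove)
  ultimately show ?thesis by simp
qed

context SG begin

definition Pot :: "('w \<Rightarrow> nat) \<Rightarrow> ('p \<Rightarrow> 'w set \<Rightarrow> 'w set) \<Rightarrow> real" where
  "Pot N0 s = (\<Sum>i\<in>UNIV. \<Sum>w\<in>UNIV. if w \<in> s i (part i w) then \<mu> w * v i (Suc (N0 w)) w else 0)"

definition capok :: "('p \<Rightarrow> 'w set \<Rightarrow> nat) \<Rightarrow> bool" where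
  "capok \<kappa> \<longleftrightarrow> (\<forall>i C. C \<in> range (part i) \<longrightarrow> \<kappa> i C \<le> K i)"

definition Inv where
  "Inv N0 \<kappa> s h m \<longleftrightarrow> valid \<kappa> s \<and> h \<in> s m (part m h) \<and>
     (\<forall>w. finders part s w = N0 w + (if w = h then 1 else 0)) \<and>
     hp (part m h) (\<kappa> m (part m h)) m (oth s m) (s m (part m h)) \<and>
     (\<forall>i C. C \<in> range (part i) \<and> \<not> (i = m \<and> C = part m h) \<longrightarrow> hp C (\<kappa> i C) i (dec h (oth s i)) (s i C))"

lemma upd_other: "i \<noteq> b \<Longrightarrow> upd s b C T i = s i"
  unfolding upd_def by simp

lemma upd_same: "upd s b C T b C = T"
  unfolding upd_def by simp

lemma upd_other_cell: "C' \<noteq> C \<Longrightarrow> upd s b C T b C' = s b C'"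
  unfolding upd_def by simp

lemma oth_upd_b: "oth (upd s b C T) b = oth s b"
  unfolding upd_def using oth_upd_self by blast

lemma upd_at: "C \<in> range (part b) \<Longrightarrow> upd s b C T b (part b w) = (if w \<in> C then T else s b (part b w))"
  unfolding upd_def using cell_eq[of C b w] part_in[of w b] by auto

lemma valid_upd:
  assumes "valid \<kappa> s" "C \<in> range (part b)" "T \<subseteq> C" "card T \<le> \<kappa> b C"
  shows "valid \<kappa> (upd s b C T)"
  using assms unfolding valid_def upd_def by auto

lemma oth_upd_in:
  assumes "i \<noteq> b" "C \<in> range (part b)" "w \<in> C"
  shows "oth (upd s b C T) i w + (if w \<in> s b C then 1 else 0) = oth s i w + (if w \<in> T then 1 else 0)"
  using oth_upd_other[OF assms(1), of s C T w] upd_at[OF assms(2), of s T w] cell_eq[OF assms(2,3)] assms(3)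
  by simp

lemma oth_upd_out:
  assumes "i \<noteq> b" "C \<in> range (part b)" "w \<notin> C"
  shows "oth (upd s b C T) i w = oth s i w"
  using oth_upd_other[OF assms(1), of s C T w] upd_at[OF assms(2), of s T w] assms(3)
  by simp

lemma fnd_upd_in:
  assumes "C \<in> range (part b)" "w \<in> C"
  shows "finders part (upd s b C T) w + (if w \<in> s b C then 1 else 0) = finders part s w + (if w \<in> T then 1 else 0)"
  using fnd_oth[of "upd s b C T" w b] fnd_oth[of s w b] oth_upd_b[of s b C T] upd_at[OF assms(1), of s T w]
    cell_eq[OF assms] assms(2) by simp

lemma fnd_upd_out:
  assumes "C \<in> range (part b)" "w \<notin> C"
  shows "finders part (upd s b C T) w = finders part s w"
  using fnd_oth[of "upd s b C T" w b] fnd_oth[of s w b] oth_upd_b[of s b C T] upd_at[OF assms(1), of s T w]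
    assms(2) by simp

lemma hp_dec_to_actual:
  assumes "hp C k i (dec h (oth s i)) S" "h \<notin> S"
  shows "hp C k i (oth s i) S"
  by (rule hp_mono[OF assms(1)]) (use assms(2) oth_le in \<open>auto simp: dec_def\<close>)

lemma hp_actual_to_dec:
  assumes "hp C k i (oth s i) S" "h \<in> S"
  shows "hp C k i (dec h (oth s i)) S"
  by (rule hp_mono[OF assms(1)]) (use assms(2) oth_le in \<open>auto simp: dec_def\<close>)

lemma card_exch:
  fixes S :: "'a::finite set"
  assumes "h \<in> S" "y \<notin> S"
  shows "card (insert y (S - {h})) = card S"
proof -
  have "S \<noteq> {}" using assms by auto
  then have "card S \<ge> 1" by (simp add: card_gt_0_iff Suc_le_eq)
  moreover have "y \<notin> S - {h}" using assms by auto
  ultimately show ?thesis using assms by (simp add: card_Diff_singleton)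
qed

lemma chain:
  assumes cap: "capok \<kappa>" and inv: "Inv N0 \<kappa> s h m"
  shows "\<exists>s'. NEk \<kappa> s' \<and> (\<forall>w. N0 w \<le> finders part s' w)"
  using inv
proof (induction "card {t. Pot N0 s < Pot N0 t}" arbitrary: s h m rule: less_induct)
  case less
  note I = less.prems[unfolded Inv_def]
  from I have V: "valid \<kappa> s" and hm: "h \<in> s m (part m h)"
    and L: "\<And>w. finders part s w = N0 w + (if w = h then 1 else 0)"
    and Hm: "hp (part m h) (\<kappa> m (part m h)) m (oth s m) (s m (part m h))"
    and Ho: "\<And>i C. C \<in> range (part i) \<Longrightarrow> \<not> (i = m \<and> C = part m h) \<Longrightarrow> hp C (\<kappa> i C) i (dec h (oth s i)) (s i C)"
    by auto
  show ?case
  proof (cases "\<forall>b. b \<noteq> m \<and> h \<in> s b (part b h) \<longrightarrow> hp (part b h) (\<kappa> b (part b h)) b (oth s b) (s b (part b h))")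
    case A: True
    have "NEk \<kappa> s" unfolding NEk_def
    proof (intro conjI allI impI V)
      fix i C assume C: "C \<in> range (part i)"
      show "hp C (\<kappa> i C) i (oth s i) (s i C)"
      proof (cases "i = m \<and> C = part m h")
        case True then show ?thesis using Hm by simp
      next
        case nm: False
        show ?thesis
        proof (cases "h \<in> C")
          case False
          show ?thesis by (rule hp_cong[OF Ho[OF C nm]]) (use False in \<open>auto simp: dec_def\<close>)
        next
          case hC: True
          then have Cp: "C = part i h" using cell_eq[OF C hC] by simp
          then have "i \<noteq> m" using nm by auto
          show ?thesis
          proof (cases "h \<in> s i C")
            case True then show ?thesis using A \<open>i \<noteq> m\<close> Cp by auto
          next
            case False then show ?thesis by (rule hp_dec_to_actual[OF Ho[OF C nm]])
          qed
        qed
      qed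
    qed
    then show ?thesis using L by (metis le_add1)
  next
    case False
    then obtain b where b: "b \<noteq> m" "h \<in> s b (part b h)"
      and nh: "\<not> hp (part b h) (\<kappa> b (part b h)) b (oth s b) (s b (part b h))" by auto
    define Cb where "Cb = part b h"
    define S where "S = s b Cb"
    have Cbr: "Cb \<in> range (part b)" unfolding Cb_def by simp
    have hS: "h \<in> S" using b unfolding S_def Cb_def by simp
    have hCb: "h \<in> Cb" using part_in unfolding Cb_def by simp
    have Hb: "hp Cb (\<kappa> b Cb) b (dec h (oth s b)) S" using Ho[OF Cbr] b(1) unfolding S_def by auto
    have kK: "\<kappa> b Cb \<le> K b" using cap Cbr unfolding capok_def by auto
    have nh': "\<not> opt Cb (\<kappa> b Cb) (fv b (oth s b)) (hc b Cb) S" using nh unfolding hp_def Cb_def S_def by simp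
    have eqf: "\<And>w. w \<noteq> h \<Longrightarrow> fv b (oth s b) w = fv b (dec h (oth s b)) w" by (simp add: fv_def dec_def)
    have lef: "fv b (oth s b) h \<le> fv b (dec h (oth s b)) h" by (rule fv_mono) (auto simp: dec_def oth_le)
    have SCb: "S \<subseteq> Cb" "card S \<le> \<kappa> b Cb" using Hb unfolding hp_def opt_def by auto
    have notC: "h \<notin> C" "y \<notin> C" if "C \<in> range (part b)" "C \<noteq> Cb" "y \<in> Cb" for C y
      using cell_disj[OF Cbr that(1)] that hCb by auto
    from opt_change[OF cvx_hc kK Hb[unfolded hp_def] hS eqf lef] nh'
    consider (drop) "opt Cb (\<kappa> b Cb) (fv b (oth s b)) (hc b Cb) (S - {h})"
      | (exch) y where "y \<in> Cb - S" "opt Cb (\<kappa> b Cb) (fv b (oth s b)) (hc b Cb) (insert y (S - {h}))"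
      by blast
    then show ?thesis
    proof cases
      case drop
      define s' where "s' = upd s b Cb (S - {h})"
      have TC: "S - {h} \<subseteq> Cb" "card (S - {h}) \<le> \<kappa> b Cb" using drop unfolding opt_def by auto
      have oth_i: "oth s' i = dec h (oth s i)" if "i \<noteq> b" for i
      proof
        fix w show "oth s' i w = dec h (oth s i) w"
        proof (cases "w \<in> Cb")
          case True
          have E: "oth s' i w + (if w \<in> S then 1 else 0) = oth s i w + (if w \<in> S - {h} then 1 else 0)"
            using oth_upd_in[OF that Cbr True, of s "S - {h}"] unfolding s'_def S_def by simp
          show ?thesis
          proof (cases "w = h")
            case wh: True
            then have "oth s' i w + 1 = oth s i w" using E hS by simp
            then show ?thesis using wh by (simp add: dec_def)
          next
            case wh: False
            have "(w \<in> S) = (w \<in> S - {h})" using wh by auto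
            then have "oth s' i w = oth s i w" using E by simp
            then show ?thesis using wh by (simp add: dec_def)
          qed
        next
          case False
          then have "w \<noteq> h" using hCb by auto
          then show ?thesis using oth_upd_out[OF that Cbr False, of s "S - {h}"] unfolding s'_def
            by (simp add: dec_def)
        qed
      qed
      have fnd': "finders part s' w = N0 w" for w
      proof (cases "w \<in> Cb")
        case True
        have E: "finders part s' w + (if w \<in> S then 1 else 0) = finders part s w + (if w \<in> S - {h} then 1 else 0)"
          using fnd_upd_in[OF Cbr True, of s "S - {h}"] unfolding s'_def S_def by simp
        show ?thesis
        proof (cases "w = h")
          case wh: True
          then show ?thesis using E hS L[of w] by simp
        next
          case wh: False
          have "(w \<in> S) = (w \<in> S - {h})" using wh by auto
          then show ?thesis using E wh L[of w] by simp
        qed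
      next
        case False
        then have "w \<noteq> h" using hCb by auto
        then show ?thesis using fnd_upd_out[OF Cbr False, of s "S - {h}"] L[of w] unfolding s'_def by simp
      qed
      have "NEk \<kappa> s'" unfolding NEk_def
      proof (intro conjI allI impI)
        show "valid \<kappa> s'" unfolding s'_def by (rule valid_upd[OF V Cbr TC])
        fix i C assume C: "C \<in> range (part i)"
        show "hp C (\<kappa> i C) i (oth s' i) (s' i C)"
        proof (cases "i = b")
          case True
          show ?thesis
          proof (cases "C = Cb")
            case True
            then show ?thesis using drop \<open>i = b\<close> unfolding s'_def hp_def by (simp add: upd_same oth_upd_b)
          next
            case False
            have "hp C (\<kappa> b C) b (dec h (oth s b)) (s b C)" using Ho[of C b] C \<open>i = b\<close> b(1) by auto
            then have "hp C (\<kappa> b C) b (oth s b) (s b C)"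
              by (rule hp_cong) (use notC[of C h] C \<open>i = b\<close> False hCb in \<open>auto simp: dec_def\<close>)
            then show ?thesis using \<open>i = b\<close> False unfolding s'_def by (simp add: upd_other_cell oth_upd_b)
          qed
        next
          case False
          have si: "s' i = s i" unfolding s'_def using False by (simp add: upd_other)
          show ?thesis
          proof (cases "i = m \<and> C = part m h")
            case True
            then show ?thesis using hp_actual_to_dec[OF Hm hm] si oth_i[OF False] by simp
          next
            case nm: False
            show ?thesis using Ho[OF C nm] si oth_i[OF False] by simp
          qed
        qed
      qed
      then show ?thesis using fnd' by (metis order_refl)
    next
      case exch
      define T where "T = insert y (S - {h})"
      define s' where "s' = upd s b Cb T"
      have yCb: "y \<in> Cb" "y \<notin> S" using exch by auto
      have yh: "y \<noteq> h" using yCb hS by auto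
      have oT: "opt Cb (\<kappa> b Cb) (fv b (oth s b)) (hc b Cb) T" using exch unfolding T_def by simp
      have TC: "T \<subseteq> Cb" "card T \<le> \<kappa> b Cb" using oT unfolding opt_def by auto
      have cT: "card T = card S" unfolding T_def by (rule card_exch[OF hS yCb(2)])
      have oth_i: "dec y (oth s' i) = dec h (oth s i)" if "i \<noteq> b" for i
      proof
        fix w show "dec y (oth s' i) w = dec h (oth s i) w"
        proof (cases "w \<in> Cb")
          case True
          have E: "oth s' i w + (if w \<in> S then 1 else 0) = oth s i w + (if w \<in> T then 1 else 0)"
            using oth_upd_in[OF that Cbr True, of s T] unfolding s'_def S_def by simp
          show ?thesis
          proof (cases "w = y")
            case wy: True
            have "y \<in> T" unfolding T_def by simp
            then have "oth s' i w = oth s i w + 1" using E yCb wy by simp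
            then show ?thesis using wy yh by (simp add: dec_def)
          next
            case wy: False
            show ?thesis
            proof (cases "w = h")
              case wh: True
              have "h \<notin> T" unfolding T_def using yh by simp
              then have "oth s' i w + 1 = oth s i w" using E hS wh by simp
              then show ?thesis using wh wy by (simp add: dec_def)
            next
              case wh: False
              have "(w \<in> S) = (w \<in> T)" unfolding T_def using wy wh by auto
              then have "oth s' i w = oth s i w" using E by simp
              then show ?thesis using wh wy by (simp add: dec_def)
            qed
          qed
        next
          case False
          then have "w \<noteq> h" "w \<noteq> y" using hCb yCb by auto
          then show ?thesis using oth_upd_out[OF that Cbr False, of s T] unfolding s'_def
            by (simp add: dec_def)
        qed
      qed
      have fnd': "finders part s' w = N0 w + (if w = y then 1 else 0)" for w
      proof (cases "w \<in> Cb")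
        case True
        have E: "finders part s' w + (if w \<in> S then 1 else 0) = finders part s w + (if w \<in> T then 1 else 0)"
          using fnd_upd_in[OF Cbr True, of s T] unfolding s'_def S_def by simp
        show ?thesis
        proof (cases "w = y")
          case wy: True
          have "y \<in> T" unfolding T_def by simp
          then show ?thesis using E yCb wy yh L[of w] by simp
        next
          case wy: False
          show ?thesis
          proof (cases "w = h")
            case wh: True
            have "h \<notin> T" unfolding T_def using yh by simp
            then show ?thesis using E hS wh wy L[of w] by simp
          next
            case wh: False
            have "(w \<in> S) = (w \<in> T)" unfolding T_def using wy wh by auto
            then show ?thesis using E wh wy L[of w] by simp
          qed
        qed
      next
        case False
        then have "w \<noteq> h" "w \<noteq> y" using hCb yCb by auto
        then show ?thesis using fnd_upd_out[OF Cbr False, of s T] L[of w] unfolding s'_def by simp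
      qed
      have pby: "part b y = Cb" using cell_eq[OF Cbr yCb(1)] .
      have inv': "Inv N0 \<kappa> s' y b" unfolding Inv_def
      proof (intro conjI allI impI)
        show "valid \<kappa> s'" unfolding s'_def by (rule valid_upd[OF V Cbr TC])
        show "y \<in> s' b (part b y)" unfolding s'_def pby T_def by (simp add: upd_same)
        show "finders part s' w = N0 w + (if w = y then 1 else 0)" for w by (rule fnd')
        show "hp (part b y) (\<kappa> b (part b y)) b (oth s' b) (s' b (part b y))"
          using oT unfolding pby s'_def hp_def by (simp add: upd_same oth_upd_b)
        fix i C assume C: "C \<in> range (part i) \<and> \<not> (i = b \<and> C = part b y)"
        show "hp C (\<kappa> i C) i (dec y (oth s' i)) (s' i C)"
        proof (cases "i = b")
          case True
          then have CC: "C \<in> range (part b)" "C \<noteq> Cb" using C pby by auto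
          have "hp C (\<kappa> b C) b (dec h (oth s b)) (s b C)" using Ho[of C b] CC b(1) by auto
          then have "hp C (\<kappa> b C) b (dec y (oth s b)) (s b C)"
            by (rule hp_cong) (use notC[OF CC yCb(1)] notC[OF CC hCb] in \<open>auto simp: dec_def\<close>)
          then show ?thesis using True CC unfolding s'_def by (simp add: upd_other_cell oth_upd_b)
        next
          case False
          have si: "s' i = s i" unfolding s'_def using False by (simp add: upd_other)
          show ?thesis
          proof (cases "i = m \<and> C = part m h")
            case True
            then show ?thesis using hp_actual_to_dec[OF Hm hm] si oth_i[OF False] by simp
          next
            case nm: False
            show ?thesis using Ho[of C i] C nm si oth_i[OF False] by simp
          qed
        qed
      qed
      let ?f = "fv b (oth s b)"
      have "sum ?f T - hc b Cb (card T) > sum ?f S - hc b Cb (card S)"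
      proof -
        have "\<not> (\<forall>T'. T' \<subseteq> Cb \<and> card T' \<le> \<kappa> b Cb \<longrightarrow> sum ?f T' - hc b Cb (card T') \<le> sum ?f S - hc b Cb (card S))"
          using nh' SCb unfolding opt_def by blast
        then obtain T' where T': "T' \<subseteq> Cb" "card T' \<le> \<kappa> b Cb"
          "sum ?f T' - hc b Cb (card T') > sum ?f S - hc b Cb (card S)"
          by (auto simp: not_le)
        moreover have "sum ?f T' - hc b Cb (card T') \<le> sum ?f T - hc b Cb (card T)"
          using oT T' unfolding opt_def by auto
        ultimately show ?thesis by simp
      qed
      moreover have "sum ?f T = ?f y + sum ?f S - ?f h"
        using yCb hS unfolding T_def by (simp add: sum.remove)
      ultimately have fyh: "?f y > ?f h" using cT by simp
      have othy: "oth s b y = N0 y" using fnd_oth[of s y b] L[of y] pby yCb yh unfolding S_def by simp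
      have othh: "oth s b h = N0 h" using fnd_oth[of s h b] L[of h] b(2) by simp
      define gv where "gv w = \<mu> w * v b (Suc (N0 w)) w" for w
      have gvy: "gv y > gv h" using fyh othy othh unfolding gv_def fv_def by simp
      define G where "G t i = (\<Sum>w\<in>UNIV. if w \<in> t i (part i w) then \<mu> w * v i (Suc (N0 w)) w else 0)" for t i
      have PG: "Pot N0 t = sum (G t) UNIV" for t unfolding Pot_def G_def by simp
      have Gb: "G s' b = G s b - gv h + gv y"
      proof -
        let ?g = "\<lambda>w. if w \<in> s b (part b w) then \<mu> w * v b (Suc (N0 w)) w else 0"
        let ?g' = "\<lambda>w. if w \<in> s' b (part b w) then \<mu> w * v b (Suc (N0 w)) w else 0"
        let ?g1 = "\<lambda>w. if w = h then 0 else ?g w"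
        have sb: "s' b (part b w) = (if w \<in> Cb then T else s b (part b w))" for w
          unfolding s'_def by (rule upd_at[OF Cbr])
        have sbS: "s b (part b w) = S" if "w \<in> Cb" for w using cell_eq[OF Cbr that] unfolding S_def by simp
        have 1: "sum ?g1 UNIV = sum ?g UNIV - ?g h + ?g1 h"
          by (rule sum_upd_point) simp
        have 2: "sum ?g' UNIV = sum ?g1 UNIV - ?g1 y + ?g' y"
        proof (rule sum_upd_point)
          fix w assume "w \<noteq> y"
          then show "?g' w = ?g1 w" using sb[of w] sbS[of w] hCb unfolding T_def by auto
        qed
        have gh: "?g h = gv h" using sbS[OF hCb] hS unfolding gv_def by simp
        have g1y: "?g1 y = 0" using sbS[OF yCb(1)] yCb yh by simp
        have g'y: "?g' y = gv y" using sb[of y] yCb unfolding T_def gv_def by simp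
        show ?thesis unfolding G_def using 1 2 gh g1y g'y by simp
      qed
      have "Pot N0 s' = Pot N0 s - gv h + gv y"
      proof -
        have "sum (G s') UNIV = sum (G s) UNIV - G s b + G s' b"
        proof (rule sum_upd_point)
          fix i assume "i \<noteq> b"
          then show "G s' i = G s i" unfolding G_def s'_def by (simp add: upd_other)
        qed
        then show ?thesis using PG Gb by simp
      qed
      then have Plt: "Pot N0 s < Pot N0 s'" using gvy by simp
      have "card {t. Pot N0 s' < Pot N0 t} < card {t. Pot N0 s < Pot N0 t}"
      proof (rule psubset_card_mono)
        show "finite {t. Pot N0 s < Pot N0 t}" by simp
        show "{t. Pot N0 s' < Pot N0 t} \<subset> {t. Pot N0 s < Pot N0 t}"
          using Plt by auto
      qed
      from less.hyps[OF this inv'] show ?thesis .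
    qed
  qed
qed

end


context SG begin

lemma valid_mono: "valid \<kappa> s \<Longrightarrow> (\<And>i C. C \<in> range (part i) \<Longrightarrow> \<kappa> i C \<le> \<kappa>' i C) \<Longrightarrow> valid \<kappa>' s"
  unfolding valid_def by (meson le_trans)

lemma phase:
  assumes cap: "capok \<kappa>" and ne: "NEk \<kappa> s" and Ca: "Ca \<in> range (part a)" and lt: "\<kappa> a Ca < K a"
  shows "\<exists>s'. NEk (\<kappa>(a := (\<kappa> a)(Ca := Suc (\<kappa> a Ca)))) s' \<and> (\<forall>w. finders part s w \<le> finders part s' w)"
proof -
  define \<kappa>' where "\<kappa>' = \<kappa>(a := (\<kappa> a)(Ca := Suc (\<kappa> a Ca)))"
  have k'1: "\<kappa>' a Ca = Suc (\<kappa> a Ca)" unfolding \<kappa>'_def by simp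
  have k'2: "\<kappa>' i C = \<kappa> i C" if "\<not> (i = a \<and> C = Ca)" for i C using that unfolding \<kappa>'_def by auto
  have cap': "capok \<kappa>'" using cap lt Ca unfolding capok_def \<kappa>'_def by auto
  have V: "valid \<kappa> s" and H: "\<And>i C. C \<in> range (part i) \<Longrightarrow> hp C (\<kappa> i C) i (oth s i) (s i C)"
    using ne unfolding NEk_def by auto
  have V': "valid \<kappa>' s" by (rule valid_mono[OF V]) (auto simp: \<kappa>'_def)
  define S where "S = s a Ca"
  have Ha: "opt Ca (\<kappa> a Ca) (fv a (oth s a)) (hc a Ca) S" using H[OF Ca] unfolding hp_def S_def by simp
  have kK: "\<kappa> a Ca + 1 \<le> K a" using lt by simp
  from opt_add[OF cvx_hc Ha kK]
  consider (same) "opt Ca (\<kappa> a Ca + 1) (fv a (oth s a)) (hc a Ca) S"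
    | (add) y where "y \<in> Ca - S" "opt Ca (\<kappa> a Ca + 1) (fv a (oth s a)) (hc a Ca) (insert y S)"
    by blast
  then show ?thesis
  proof cases
    case same
    have "NEk \<kappa>' s" unfolding NEk_def
    proof (intro conjI allI impI V')
      fix i C assume C: "C \<in> range (part i)"
      show "hp C (\<kappa>' i C) i (oth s i) (s i C)"
      proof (cases "i = a \<and> C = Ca")
        case True then show ?thesis using same k'1 unfolding hp_def S_def by auto
      next
        case False then show ?thesis using H[OF C] k'2 by simp
      qed
    qed
    then show ?thesis unfolding \<kappa>'_def by auto
  next
    case add
    define T where "T = insert y S"
    define s' where "s' = upd s a Ca T"
    have yC: "y \<in> Ca" "y \<notin> S" using add by auto
    have oT: "opt Ca (\<kappa>' a Ca) (fv a (oth s a)) (hc a Ca) T" using add k'1 unfolding T_def by simp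
    have TC: "T \<subseteq> Ca" "card T \<le> \<kappa>' a Ca" using oT unfolding opt_def by auto
    have pay: "part a y = Ca" using cell_eq[OF Ca yC(1)] .
    have oth_i: "dec y (oth s' i) = oth s i" if "i \<noteq> a" for i
    proof
      fix w show "dec y (oth s' i) w = oth s i w"
      proof (cases "w \<in> Ca")
        case True
        have E: "oth s' i w + (if w \<in> S then 1 else 0) = oth s i w + (if w \<in> T then 1 else 0)"
          using oth_upd_in[OF that Ca True, of s T] unfolding s'_def S_def by simp
        show ?thesis
        proof (cases "w = y")
          case wy: True
          then have "oth s' i w = oth s i w + 1" using E yC unfolding T_def by simp
          then show ?thesis using wy by (simp add: dec_def)
        next
          case wy: False
          have "(w \<in> S) = (w \<in> T)" using wy unfolding T_def by auto
          then have "oth s' i w = oth s i w" using E by simp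
          then show ?thesis using wy by (simp add: dec_def)
        qed
      next
        case False
        then have "w \<noteq> y" using yC by auto
        then show ?thesis using oth_upd_out[OF that Ca False, of s T] unfolding s'_def
          by (simp add: dec_def)
      qed
    qed
    have fnd': "finders part s' w = finders part s w + (if w = y then 1 else 0)" for w
    proof (cases "w \<in> Ca")
      case True
      have E: "finders part s' w + (if w \<in> S then 1 else 0) = finders part s w + (if w \<in> T then 1 else 0)"
        using fnd_upd_in[OF Ca True, of s T] unfolding s'_def S_def by simp
      show ?thesis
      proof (cases "w = y")
        case wy: True
        then show ?thesis using E yC unfolding T_def by simp
      next
        case wy: False
        have "(w \<in> S) = (w \<in> T)" using wy unfolding T_def by auto
        then show ?thesis using E wy by simp
      qed
    next
      case False
      then have "w \<noteq> y" using yC by auto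
      then show ?thesis using fnd_upd_out[OF Ca False, of s T] unfolding s'_def by simp
    qed
    have inv: "Inv (finders part s) \<kappa>' s' y a" unfolding Inv_def
    proof (intro conjI allI impI)
      show "valid \<kappa>' s'" unfolding s'_def by (rule valid_upd[OF V' Ca TC])
      show "y \<in> s' a (part a y)" unfolding s'_def pay T_def by (simp add: upd_same)
      show "finders part s' w = finders part s w + (if w = y then 1 else 0)" for w by (rule fnd')
      show "hp (part a y) (\<kappa>' a (part a y)) a (oth s' a) (s' a (part a y))"
        using oT unfolding pay s'_def hp_def by (simp add: upd_same oth_upd_b)
      fix i C assume C: "C \<in> range (part i) \<and> \<not> (i = a \<and> C = part a y)"
      show "hp C (\<kappa>' i C) i (dec y (oth s' i)) (s' i C)"
      proof (cases "i = a")
        case True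
        then have CC: "C \<in> range (part a)" "C \<noteq> Ca" using C pay by auto
        have yn: "y \<notin> C" using cell_disj[OF Ca CC(1)] CC(2) yC(1) by auto
        have "hp C (\<kappa> a C) a (oth s a) (s a C)" using H CC by auto
        then have "hp C (\<kappa> a C) a (dec y (oth s a)) (s a C)"
          by (rule hp_cong) (use yn in \<open>auto simp: dec_def\<close>)
        then show ?thesis using True CC k'2[of a C] unfolding s'_def by (simp add: upd_other_cell oth_upd_b)
      next
        case False
        have si: "s' i = s i" unfolding s'_def using False by (simp add: upd_other)
        show ?thesis using H[of C i] C si oth_i[OF False] k'2[of i C] False by simp
      qed
    qed
    from chain[OF cap' inv] show ?thesis unfolding \<kappa>'_def by blast
  qed
qed

definition Dk :: "('p \<Rightarrow> 'w set \<Rightarrow> nat) \<Rightarrow> nat" where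
  "Dk \<kappa> = (\<Sum>i\<in>UNIV. \<Sum>C\<in>range (part i). K i - \<kappa> i C)"

lemma outer:
  assumes "capok \<kappa>" "NEk \<kappa> s"
  shows "\<exists>s'. NEk (\<lambda>i C. K i) s' \<and> (\<forall>w. finders part s w \<le> finders part s' w)"
  using assms
proof (induction "Dk \<kappa>" arbitrary: \<kappa> s rule: less_induct)
  case less
  show ?case
  proof (cases "\<forall>i C. C \<in> range (part i) \<longrightarrow> \<kappa> i C = K i")
    case True
    have "NEk (\<lambda>i C. K i) s" using less.prems(2) True unfolding NEk_def valid_def by auto
    then show ?thesis by auto
  next
    case False
    then obtain a Ca where Ca: "Ca \<in> range (part a)" "\<kappa> a Ca \<noteq> K a" by auto
    then have lt: "\<kappa> a Ca < K a" using less.prems(1) unfolding capok_def by (meson le_neq_implies_less)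
    define \<kappa>' where "\<kappa>' = \<kappa>(a := (\<kappa> a)(Ca := Suc (\<kappa> a Ca)))"
    obtain s1 where s1: "NEk \<kappa>' s1" "\<forall>w. finders part s w \<le> finders part s1 w"
      using phase[OF less.prems Ca(1) lt] unfolding \<kappa>'_def by blast
    have cap': "capok \<kappa>'" using less.prems(1) lt Ca unfolding capok_def \<kappa>'_def by auto
    have "Dk \<kappa>' < Dk \<kappa>" unfolding Dk_def
    proof (rule sum_strict_mono_ex1)
      show "finite (UNIV :: 'p set)" by simp
      show "\<forall>i\<in>UNIV. (\<Sum>C\<in>range (part i). K i - \<kappa>' i C) \<le> (\<Sum>C\<in>range (part i). K i - \<kappa> i C)"
        by (auto simp: \<kappa>'_def intro!: sum_mono)
      have "(\<Sum>C\<in>range (part a). K a - \<kappa>' a C) < (\<Sum>C\<in>range (part a). K a - \<kappa> a C)"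
      proof (rule sum_strict_mono_ex1)
        show "finite (range (part a))" by simp
        show "\<forall>C\<in>range (part a). K a - \<kappa>' a C \<le> K a - \<kappa> a C" by (auto simp: \<kappa>'_def)
        show "\<exists>C\<in>range (part a). K a - \<kappa>' a C < K a - \<kappa> a C"
          using Ca lt by (intro bexI[of _ Ca]) (auto simp: \<kappa>'_def)
      qed
      then show "\<exists>i\<in>UNIV. (\<Sum>C\<in>range (part i). K i - \<kappa>' i C) < (\<Sum>C\<in>range (part i). K i - \<kappa> i C)"
        by blast
    qed
    from less.hyps[OF this cap' s1(1)] obtain s' where
      "NEk (\<lambda>i C. K i) s'" "\<forall>w. finders part s1 w \<le> finders part s' w" by blast
    then show ?thesis using s1(2) by (meson le_trans)
  qed
qed

lemma Pot_exch:
  assumes Cb: "Cb \<in> range (part b)" and hS: "h \<in> s b Cb" and hCb: "h \<in> Cb" and yC: "y \<in> Cb" "y \<notin> s b Cb"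
  shows "Pot N0 (upd s b Cb (insert y (s b Cb - {h}))) = Pot N0 s - \<mu> h * v b (Suc (N0 h)) h + \<mu> y * v b (Suc (N0 y)) y"
proof -
  define S where "S = s b Cb"
  define T where "T = insert y (S - {h})"
  define s' where "s' = upd s b Cb T"
  have hS': "h \<in> S" using hS unfolding S_def by simp
  have yh: "y \<noteq> h" using yC hS by auto
  define gv where "gv w = \<mu> w * v b (Suc (N0 w)) w" for w
  define G where "G t i = (\<Sum>w\<in>UNIV. if w \<in> t i (part i w) then \<mu> w * v i (Suc (N0 w)) w else 0)" for t i
  have PG: "Pot N0 t = sum (G t) UNIV" for t unfolding Pot_def G_def by simp
  have Gb: "G s' b = G s b - gv h + gv y"
  proof -
    let ?g = "\<lambda>w. if w \<in> s b (part b w) then \<mu> w * v b (Suc (N0 w)) w else 0"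
    let ?g' = "\<lambda>w. if w \<in> s' b (part b w) then \<mu> w * v b (Suc (N0 w)) w else 0"
    let ?g1 = "\<lambda>w. if w = h then 0 else ?g w"
    have sb: "s' b (part b w) = (if w \<in> Cb then T else s b (part b w))" for w
      unfolding s'_def by (rule upd_at[OF Cb])
    have sbS: "s b (part b w) = S" if "w \<in> Cb" for w using cell_eq[OF Cb that] unfolding S_def by simp
    have 1: "sum ?g1 UNIV = sum ?g UNIV - ?g h + ?g1 h"
      by (rule sum_upd_point) simp
    have 2: "sum ?g' UNIV = sum ?g1 UNIV - ?g1 y + ?g' y"
    proof (rule sum_upd_point)
      fix w assume "w \<noteq> y"
      then show "?g' w = ?g1 w" using sb[of w] sbS[of w] hCb unfolding T_def by auto
    qed
    have gh: "?g h = gv h" using sbS[OF hCb] hS' unfolding gv_def by simp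
    have g1y: "?g1 y = 0" using sbS[OF yC(1)] yC yh unfolding S_def by simp
    have g'y: "?g' y = gv y" using sb[of y] yC unfolding T_def gv_def by simp
    show ?thesis unfolding G_def using 1 2 gh g1y g'y by simp
  qed
  have "sum (G s') UNIV = sum (G s) UNIV - G s b + G s' b"
  proof (rule sum_upd_point)
    fix i assume "i \<noteq> b"
    then show "G s' i = G s i" unfolding G_def s'_def by (simp add: upd_other)
  qed
  then show ?thesis using PG Gb unfolding s'_def T_def S_def gv_def by simp
qed

lemma prof_upd:
  assumes "s \<in> pure_profiles part K" "C \<in> range (part b)" "T \<subseteq> C" "card T \<le> K b"
  shows "upd s b C T \<in> pure_profiles part K"
  unfolding pure_profiles_def
proof (intro CollectI allI)
  fix j
  have sj: "pure_strategy part K j (s j)" using assms(1) unfolding pure_profiles_def by auto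
  show "pure_strategy part K j (upd s b C T j)"
  proof (cases "j = b")
    case False then show ?thesis using sj by (simp add: upd_other)
  next
    case True
    show ?thesis unfolding pure_strategy_def
    proof (rule conjI[OF allI allI[OF impI]])
      fix w
      show "upd s b C T j (part j w) \<subseteq> part j w \<and> card (upd s b C T j (part j w)) \<le> K j"
      proof (cases "part b w = C")
        case True
        then show ?thesis using \<open>j = b\<close> assms(3,4) by (simp add: upd_def)
      next
        case False
        then show ?thesis using \<open>j = b\<close> sj unfolding pure_strategy_def by (simp add: upd_def)
      qed
    next
      fix C' assume "C' \<notin> range (part j)"
      then have "C' \<noteq> C" using assms(2) \<open>j = b\<close> by auto
      then show "upd s b C T j C' = {}" using sj \<open>C' \<notin> range (part j)\<close> \<open>j = b\<close>
        unfolding pure_strategy_def by (simp add: upd_def)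
    qed
  qed
qed

lemma prof_valid:
  assumes "s \<in> pure_profiles part K"
  shows "valid (\<lambda>i C. card (s i C)) s" "capok (\<lambda>i C. card (s i C))"
  using assms unfolding pure_profiles_def pure_strategy_def valid_def capok_def by auto

lemma U_mono:
  assumes "\<And>w. finders part s w \<le> finders part s' w"
  shows "social_payoff part \<mu> vs s \<le> social_payoff part \<mu> vs s'"
  unfolding social_payoff_def
proof (rule sum_mono)
  fix w
  have "vs w \<ge> 0" using sg unfolding search_game_def by auto
  then have "\<mu> w * vs w \<ge> 0" using mu_nonneg by simp
  then show "\<mu> w * vs w * (if 1 \<le> finders part s w then 1 else 0) \<le> \<mu> w * vs w * (if 1 \<le> finders part s' w then 1 else 0)"
    using assms[of w] by auto
qed

lemma ssd_scaled:
  assumes ssd: "solitary_search_dominant part \<mu> K c v" and C: "C \<in> range (part i)" and x: "x \<in> C" and y: "y \<in> C"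
  shows "\<mu> y * v i 2 y \<le> \<mu> x * v i 1 x" "msum C * (c i (K i) - c i (K i - 1)) \<le> \<mu> x * v i 1 x"
proof -
  have px: "part i x = C" using cell_eq[OF C x] .
  have py: "part i y = C" using cell_eq[OF C y] .
  have M: "msum C > 0" using msum_pos px by metis
  have cp: "cond_prob part \<mu> i w = \<mu> w / msum C" if "part i w = C" for w
    unfolding cond_prob_def msum_def using that by simp
  have yx: "y \<in> part i x" using y px by simp
  have a0: "cond_prob part \<mu> i y * v i 2 y \<le> cond_prob part \<mu> i x * v i 1 x"
    and b0: "c i (K i) - c i (K i - 1) \<le> cond_prob part \<mu> i x * v i 1 x"
    using ssd yx unfolding solitary_search_dominant_def by blast+
  have a: "\<mu> x / msum C * v i 1 x \<ge> \<mu> y / msum C * v i 2 y"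
    using a0 by (simp only: cp[OF px] cp[OF py])
  have b: "\<mu> x / msum C * v i 1 x \<ge> c i (K i) - c i (K i - 1)"
    using b0 by (simp only: cp[OF px])
  have "msum C * (\<mu> y / msum C * v i 2 y) \<le> msum C * (\<mu> x / msum C * v i 1 x)"
    using a M by (intro mult_left_mono) auto
  then show "\<mu> y * v i 2 y \<le> \<mu> x * v i 1 x" using M by simp
  have "msum C * (c i (K i) - c i (K i - 1)) \<le> msum C * (\<mu> x / msum C * v i 1 x)"
    using b M by (intro mult_left_mono) auto
  then show "msum C * (c i (K i) - c i (K i - 1)) \<le> \<mu> x * v i 1 x" using M by simp
qed

lemma s0_exists:
  assumes oc: "ordinally_consistent part \<mu> v vs" and ssd: "solitary_search_dominant part \<mu> K c v"
  shows "\<exists>s0. s0 \<in> pure_profiles part K \<and> social_payoff part \<mu> vs s0 = U_opt part \<mu> K vs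
           \<and> NEk (\<lambda>i C. card (s0 i C)) s0"
proof -
  define Prof where "Prof = pure_profiles part K"
  define U where "U = social_payoff part \<mu> vs"
  define Uopt where "Uopt = U_opt part \<mu> K vs"
  define Cnt where "Cnt t = (\<Sum>w\<in>UNIV. real (finders part t w))" for t
  define P3 where "P3 = Pot (\<lambda>_. 0)"
  have finP: "finite Prof" by simp
  have emp: "(\<lambda>i C. {}) \<in> Prof" unfolding Prof_def pure_profiles_def pure_strategy_def by simp
  have Uopt_eq: "Uopt = Max (U ` Prof)" unfolding Uopt_def U_opt_def U_def Prof_def by simp
  have Umax: "U t \<le> Uopt" if "t \<in> Prof" for t using finP that unfolding Uopt_eq by (intro Max_ge) auto
  have "Uopt \<in> U ` Prof" unfolding Uopt_eq using finP emp by (intro Max_in) auto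
  then obtain s1 where s1: "s1 \<in> Prof" "U s1 = Uopt" by auto
  define Opt where "Opt = {t \<in> Prof. U t = Uopt}"
  have "Opt \<noteq> {}" using s1 unfolding Opt_def by auto
  then obtain s2 where s2: "s2 \<in> Opt" "\<And>z. z \<in> Opt \<Longrightarrow> - Cnt z \<le> - Cnt s2"
    using max_obtain[of Opt "\<lambda>t. - Cnt t"] by blast
  define Opt2 where "Opt2 = {t \<in> Opt. \<forall>z\<in>Opt. Cnt t \<le> Cnt z}"
  have "Opt2 \<noteq> {}" using s2 unfolding Opt2_def by force
  then obtain s0 where s0: "s0 \<in> Opt2" "\<And>z. z \<in> Opt2 \<Longrightarrow> P3 z \<le> P3 s0"
    using max_obtain[of Opt2 P3] by blast
  have s0P: "s0 \<in> Prof" and s0U: "U s0 = Uopt" and s0C: "\<And>z. z \<in> Opt \<Longrightarrow> Cnt s0 \<le> Cnt z"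
    using s0(1) unfolding Opt2_def Opt_def by auto
  have ps: "pure_strategy part K i (s0 i)" for i using s0P unfolding Prof_def pure_profiles_def by auto
  have sub: "s0 i (part i w) \<subseteq> part i w" "card (s0 i (part i w)) \<le> K i" for i w
    using ps[of i] unfolding pure_strategy_def by auto
  have disj: "finders part s0 w \<le> 1" for w
  proof (rule ccontr)
    assume "\<not> finders part s0 w \<le> 1"
    then have ge2: "finders part s0 w \<ge> 2" by simp
    then have "card {j. w \<in> s0 j (part j w)} \<ge> 2" unfolding finders_def by simp
    then have ne: "{j. w \<in> s0 j (part j w)} \<noteq> {}" by (intro notI) simp
    then obtain i where "i \<in> {j. w \<in> s0 j (part j w)}" by blast
    then have i: "w \<in> s0 i (part i w)" by simp
    define C where "C = part i w"
    define S where "S = s0 i C"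
    have Cr: "C \<in> range (part i)" unfolding C_def by simp
    have wC: "w \<in> C" unfolding C_def by (rule part_in)
    have wS: "w \<in> S" using i unfolding S_def C_def by simp
    define t where "t = upd s0 i C (S - {w})"
    have tP: "t \<in> Prof" unfolding t_def Prof_def
    proof (rule prof_upd)
      show "s0 \<in> pure_profiles part K" using s0P unfolding Prof_def .
      show "C \<in> range (part i)" by (rule Cr)
      show "S - {w} \<subseteq> C" using sub[of i w] unfolding S_def C_def by auto
      have "card (S - {w}) \<le> card S" by (rule card_Diff1_le)
      then show "card (S - {w}) \<le> K i" using sub[of i w] unfolding S_def C_def by simp
    qed
    have ft: "finders part t w' = finders part s0 w' - (if w' = w then 1 else 0)" for w'
    proof (cases "w' \<in> C")
      case True
      have E: "finders part t w' + (if w' \<in> S then 1 else 0) = finders part s0 w' + (if w' \<in> S - {w} then 1 else 0)"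
        using fnd_upd_in[OF Cr True, of s0 "S - {w}"] unfolding t_def S_def by simp
      show ?thesis
      proof (cases "w' = w")
        case True then show ?thesis using E wS by simp
      next
        case False
        have "(w' \<in> S) = (w' \<in> S - {w})" using False by auto
        then show ?thesis using E False by simp
      qed
    next
      case False
      then have "w' \<noteq> w" using wC by auto
      then show ?thesis using fnd_upd_out[OF Cr False, of s0 "S - {w}"] unfolding t_def by simp
    qed
    have "U t = U s0" unfolding U_def social_payoff_def
    proof (rule sum.cong[OF refl])
      fix w' show "\<mu> w' * vs w' * (if 1 \<le> finders part t w' then 1 else 0) = \<mu> w' * vs w' * (if 1 \<le> finders part s0 w' then 1 else 0)"
        using ft[of w'] ge2 by (cases "w' = w") auto
    qed
    then have tO: "t \<in> Opt" using tP s0U unfolding Opt_def by simp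
    have "Cnt t < Cnt s0" unfolding Cnt_def
    proof (rule sum_strict_mono_ex1)
      show "\<forall>w'\<in>UNIV. real (finders part t w') \<le> real (finders part s0 w')" using ft by auto
      have "real (finders part t w) < real (finders part s0 w)" using ft[of w] ge2 by simp
      then show "\<exists>w'\<in>UNIV. real (finders part t w') < real (finders part s0 w')" by blast
    qed simp
    then show False using s0C[OF tO] by simp
  qed
  have NE: "NEk (\<lambda>i C. card (s0 i C)) s0" unfolding NEk_def
  proof (intro conjI allI impI)
    show "valid (\<lambda>i C. card (s0 i C)) s0" using prof_valid(1) s0P unfolding Prof_def by simp
    fix i C assume Cr: "C \<in> range (part i)"
    define S where "S = s0 i C"
    obtain w0 where w0: "C = part i w0" using Cr by auto
    have SC: "S \<subseteq> C" "card S \<le> K i" using sub[of i w0] w0 unfolding S_def by auto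
    have px: "part i x = C" if "x \<in> C" for x using cell_eq[OF Cr that] .
    have ox: "oth s0 i x = 0" if "x \<in> S" for x
    proof -
      have "x \<in> s0 i (part i x)" using that px SC unfolding S_def by auto
      then have "finders part s0 x = oth s0 i x + 1" using fnd_oth[of s0 x i] by simp
      then show ?thesis using disj[of x] by simp
    qed
    have fx1: "finders part s0 x = 1" if "x \<in> S" for x
    proof -
      have "x \<in> s0 i (part i x)" using that px SC unfolding S_def by auto
      then show ?thesis using fnd_oth[of s0 x i] ox[OF that] by simp
    qed
    have oy: "oth s0 i y = finders part s0 y" if "y \<in> C - S" for y
    proof -
      have "y \<notin> s0 i (part i y)" using that px unfolding S_def by auto
      then show ?thesis using fnd_oth[of s0 y i] by simp
    qed
    show "hp C (card (s0 i C)) i (oth s0 i) (s0 i C)"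
      unfolding hp_def S_def[symmetric]
    proof (rule loc_opt[OF cvx_hc SC(1) order_refl SC(2)])
      show "fv i (oth s0 i) y \<le> hc i C (card S + 1) - hc i C (card S)" if "y \<in> C - S" "card S < card S" for y
        using that by simp
      show "hc i C (card S) - hc i C (card S - 1) \<le> fv i (oth s0 i) x" if xS: "x \<in> S" for x
      proof -
        have "S \<noteq> {}" using xS by auto
        then have "1 \<le> card S" by (simp add: card_gt_0_iff Suc_le_eq)
        then have "hc i C (card S) - hc i C (card S - 1) \<le> hc i C (K i) - hc i C (K i - 1)"
          using cvx_mono[OF cvx_hc, of "card S" "K i" i C] SC(2) by simp
        also have "\<dots> = msum C * (c i (K i) - c i (K i - 1))" unfolding hc_def by (simp add: right_diff_distrib)
        also have "\<dots> \<le> \<mu> x * v i 1 x" using ssd_scaled(2)[OF ssd Cr, of x x] xS SC by auto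
        also have "\<dots> = fv i (oth s0 i) x" unfolding fv_def using ox[OF xS] by simp
        finally show ?thesis .
      qed
      show "fv i (oth s0 i) y \<le> fv i (oth s0 i) x" if xS: "x \<in> S" and yS: "y \<in> C - S" for x y
      proof -
        have xC: "x \<in> C" using xS SC by auto
        have yC: "y \<in> C" using yS by auto
        have fvx: "fv i (oth s0 i) x = \<mu> x * v i 1 x" unfolding fv_def using ox[OF xS] by simp
        show ?thesis
        proof (cases "finders part s0 y = 0")
          case False
          then have "finders part s0 y = 1" using disj[of y] by simp
          then have "fv i (oth s0 i) y = \<mu> y * v i 2 y" unfolding fv_def using oy[OF yS] by (simp add: numeral_2_eq_2)
          then show ?thesis using fvx ssd_scaled(1)[OF ssd Cr xC yC] by simp
        next
          case f0y: True
          have fvy: "fv i (oth s0 i) y = \<mu> y * v i 1 y" unfolding fv_def using oy[OF yS] f0y by simp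
          show ?thesis
          proof (rule ccontr)
            assume "\<not> ?thesis"
            then have lt: "\<mu> x * v i 1 x < \<mu> y * v i 1 y" using fvx fvy by simp
            have yx: "y \<in> part i x" using yC px[OF xC] by simp
            have ocx: "\<mu> x * vs x \<le> \<mu> y * vs y" using oc yx lt unfolding ordinally_consistent_def by blast
            have xy: "x \<noteq> y" using xS yS by auto
            define T where "T = insert y (S - {x})"
            define t where "t = upd s0 i C T"
            have tP: "t \<in> Prof" unfolding t_def Prof_def
            proof (rule prof_upd)
              show "s0 \<in> pure_profiles part K" using s0P unfolding Prof_def .
              show "C \<in> range (part i)" by (rule Cr)
              show "T \<subseteq> C" using SC yC unfolding T_def by auto
              show "card T \<le> K i" using card_exch[OF xS, of y] yS SC unfolding T_def by simp
            qed
            have f0x: "finders part s0 x = 1" by (rule fx1[OF xS])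
            have ft: "finders part t w = (if w = x then 0 else if w = y then 1 else finders part s0 w)" for w
            proof (cases "w \<in> C")
              case True
              have E: "finders part t w + (if w \<in> S then 1 else 0) = finders part s0 w + (if w \<in> T then 1 else 0)"
                using fnd_upd_in[OF Cr True, of s0 T] unfolding t_def S_def by simp
              show ?thesis
              proof (cases "w = x")
                case True then show ?thesis using E xS xy f0x unfolding T_def by simp
              next
                case wx: False
                show ?thesis
                proof (cases "w = y")
                  case True then show ?thesis using E yS wx f0y unfolding T_def by simp
                next
                  case wy: False
                  have "(w \<in> S) = (w \<in> T)" using wx wy unfolding T_def by auto
                  then show ?thesis using E wx wy by simp
                qed
              qed
            next
              case False
              then have "w \<noteq> x" "w \<noteq> y" using xC yC by auto
              then show ?thesis using fnd_upd_out[OF Cr False, of s0 T] unfolding t_def by simp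
            qed
            define u where "u t' w = \<mu> w * vs w * (if 1 \<le> finders part t' w then 1 else (0::real))" for t' w
            have Uu: "U t' = sum (u t') UNIV" for t' unfolding U_def social_payoff_def u_def by simp
            let ?u1 = "\<lambda>w. if w = x then 0 else u s0 w"
            have u1: "sum ?u1 UNIV = sum (u s0) UNIV - u s0 x + ?u1 x" by (rule sum_upd_point) simp
            have u2: "sum (u t) UNIV = sum ?u1 UNIV - ?u1 y + u t y"
            proof (rule sum_upd_point)
              fix w assume "w \<noteq> y" then show "u t w = ?u1 w" unfolding u_def using ft[of w] by simp
            qed
            have "U t = U s0 - \<mu> x * vs x + \<mu> y * vs y"
              using u1 u2 Uu[of t] Uu[of s0] f0x f0y ft[of y] xy unfolding u_def by simp
            then have "U t \<ge> Uopt" using ocx s0U by simp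
            then have tO: "t \<in> Opt" using Umax[OF tP] tP unfolding Opt_def by simp
            let ?c1 = "\<lambda>w. if w = x then 0 else real (finders part s0 w)"
            have c1: "sum ?c1 UNIV = sum (\<lambda>w. real (finders part s0 w)) UNIV - real (finders part s0 x) + ?c1 x"
              by (rule sum_upd_point) simp
            have c2: "sum (\<lambda>w. real (finders part t w)) UNIV = sum ?c1 UNIV - ?c1 y + real (finders part t y)"
            proof (rule sum_upd_point)
              fix w assume "w \<noteq> y" then show "real (finders part t w) = ?c1 w" using ft[of w] by simp
            qed
            have "Cnt t = Cnt s0" unfolding Cnt_def using c1 c2 f0x f0y ft[of y] xy by simp
            then have tO2: "t \<in> Opt2" using tO s0C unfolding Opt2_def by simp
            have "P3 t = P3 s0 - \<mu> x * v i (Suc 0) x + \<mu> y * v i (Suc 0) y"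
              unfolding P3_def t_def T_def S_def
              by (rule Pot_exch[OF Cr]) (use xS yS xC SC in \<open>auto simp: S_def\<close>)
            then have "P3 t > P3 s0" using lt by simp
            then show False using s0(2)[OF tO2] by simp
          qed
        qed
      qed
    qed
  qed
  show ?thesis using s0P s0U NE unfolding Prof_def U_def Uopt_def by blast
qed

end

theorem theorem1:
  fixes part :: "'p::finite \<Rightarrow> 'w::finite \<Rightarrow> 'w set"
    and \<mu> :: "'w \<Rightarrow> real" and K :: "'p \<Rightarrow> nat" and c :: "'p \<Rightarrow> nat \<Rightarrow> real"
    and v :: "'p \<Rightarrow> nat \<Rightarrow> 'w \<Rightarrow> real" and vs :: "'w \<Rightarrow> real"
  assumes "search_game part \<mu> K c v vs"
    and "ordinally_consistent part \<mu> v vs"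
    and "solitary_search_dominant part \<mu> K c v"
  shows "\<exists>s. pure_nash part \<mu> K c v s \<and> social_payoff part \<mu> vs s = U_opt part \<mu> K vs"
proof -
  interpret SG part \<mu> K c v vs by unfold_locales (rule assms(1))
  obtain s0 where s0: "s0 \<in> pure_profiles part K" "social_payoff part \<mu> vs s0 = U_opt part \<mu> K vs"
    "NEk (\<lambda>i C. card (s0 i C)) s0"
    using s0_exists[OF assms(2,3)] by blast
  obtain sF where sF: "NEk (\<lambda>i C. K i) sF" "\<forall>w. finders part s0 w \<le> finders part sF w"
    using outer[OF prof_valid(2)[OF s0(1)] s0(3)] by blast
  have pn: "pure_nash part \<mu> K c v sF" by (rule NE_full[OF sF(1)])
  then have sFP: "sF \<in> pure_profiles part K" unfolding pure_nash_def by simp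
  have "social_payoff part \<mu> vs sF \<le> U_opt part \<mu> K vs"
    unfolding U_opt_def using sFP by (intro Max_ge) auto
  moreover have "social_payoff part \<mu> vs s0 \<le> social_payoff part \<mu> vs sF"
    by (rule U_mono) (use sF(2) in auto)
  ultimately show ?thesis using pn s0(2) by auto
qed


end
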